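(* For every prime power $q$, all integers $n$, $r\le\lfloor n/2\rfloor$ and $0<\rho<r$, $$K_{\mathrm{C}}(q,n,r,\rho) \ge \frac{{n\brack r}}{V_{\mathrm{C}}(\rho) - \frac{\epsilon}{\delta}N_{\mathrm{C}}(\rho)},$$ where $\epsilon = \left\lceil \frac{b_\rho}{c_{\rho+1}}\right\rceil c_{\rho+1} - b_\rho$ and $\delta = N_{\mathrm{C}}(1) - c_\rho + 2\epsilon$.
   Context: ${m\brack k}=\prod_{i=0}^{k-1}\frac{q^m-q^i}{q^k-q^i}$ is the Gaussian binomial. $N_{\mathrm{C}}(d) = q^{d^2}{r\brack d}{n-r \brack d}$ and $V_{\mathrm{C}}(t) = \sum_{d=0}^t N_{\mathrm{C}}(d)$. For $0\le j\le r$, $c_j = {j\brack 1}^2$ and $b_j = q^{2j+1}{r-j\brack 1}{n-r-j\brack 1}$. $E_r(q,n)$ is the set of $r$-dimensional subspaces of $\mathrm{GF}(q)^n$ with injection distance $d_{\mathrm{I}}(U,V)=\dim(U+V)-\min\{\dim U,\dim V\}$; the covering radius of a nonempty $\mathcal{C}\subseteq E_r(q,n)$ is $\max_U\min_{C\in\mathcal{C}}d_{\mathrm{I}}(U,C)$, and $K_{\mathrm{C}}(q,n,r,\rho)$ is the minimum cardinality of a subset of $E_r(q,n)$ with covering radius at most $\rho$. *)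

theory Defs
  imports "HOL-Analysis.Analysis"
begin

definition gauss_binom :: "nat \<Rightarrow> nat \<Rightarrow> nat \<Rightarrow> real" where
  "gauss_binom q m k = (\<Prod>i<k. (real q ^ m - real q ^ i) / (real q ^ k - real q ^ i))"

definition NC :: "nat \<Rightarrow> nat \<Rightarrow> nat \<Rightarrow> nat \<Rightarrow> real" where
  "NC q n r d = real q ^ (d^2) * gauss_binom q r d * gauss_binom q (n - r) d"

definition VC :: "nat \<Rightarrow> nat \<Rightarrow> nat \<Rightarrow> nat \<Rightarrow> real" where
  "VC q n r t = (\<Sum>d\<le>t. NC q n r d)"

definition cC :: "nat \<Rightarrow> nat \<Rightarrow> real" where
  "cC q j = (gauss_binom q j 1)^2"

definition bC :: "nat \<Rightarrow> nat \<Rightarrow> nat \<Rightarrow> nat \<Rightarrow> real" where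
  "bC q n r j = real q ^ (2*j+1) * gauss_binom q (r - j) 1 * gauss_binom q (n - r - j) 1"

text \<open>E_r(q,n): r-dimensional subspaces of GF(q)^n, modelled as 'a^'n with
  'a a finite field (q = CARD('a)) and n = CARD('n).\<close>
definition Esub :: "nat \<Rightarrow> ('a::{field,finite} ^ 'n) set set" where
  "Esub r = {U. vec.subspace U \<and> vec.dim U = r}"

definition dI :: "('a::{field,finite} ^ 'n) set \<Rightarrow> ('a ^ 'n) set \<Rightarrow> nat" where
  "dI U V = vec.dim (vec.span (U \<union> V)) - min (vec.dim U) (vec.dim V)"

definition covrad :: "nat \<Rightarrow> ('a::{field,finite} ^ 'n) set set \<Rightarrow> nat" where
  "covrad r C = Max {Min {dI U D | D. D \<in> C} | U. U \<in> (Esub r :: ('a ^ 'n) set set)}"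

text \<open>K_C(q,n,r,rho) with q = CARD('a), n = CARD('n).\<close>
definition KC :: "'a::{field,finite} itself \<Rightarrow> 'n::finite itself \<Rightarrow> nat \<Rightarrow> nat \<Rightarrow> nat" where
  "KC _ _ r \<rho> = (LEAST k. \<exists>C. C \<subseteq> (Esub r :: ('a ^ 'n) set set) \<and> C \<noteq> {} \<and>
       card C = k \<and> covrad r C \<le> \<rho>)"

end

theory Submission
  imports Defs
begin


lemma card_span_indep:
  fixes B :: "('a::{field,finite}^'n) set"
  assumes "vec.independent B"
  shows "card (vec.span B) = CARD('a) ^ card B"
proof -
  have "finite B" using assms vec.finiteI_independent by blast
  then show ?thesis using assms
  proof (induction B rule: finite_induct)
    case empty
    then show ?case by simp
  next
    case (insert a B)
    have indB: "vec.independent B" using insert.prems vec.independent_mono by blast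
    have anot: "a \<notin> vec.span B" using insert.prems insert.hyps by (simp add: vec.independent_insert)
    have eq: "vec.span (insert a B) = (\<lambda>(k,y). k *s a + y) ` (UNIV \<times> vec.span B)"
    proof
      show "vec.span (insert a B) \<subseteq> (\<lambda>(k,y). k *s a + y) ` (UNIV \<times> vec.span B)"
      proof
        fix x assume "x \<in> vec.span (insert a B)"
        then obtain k where k: "x - k *s a \<in> vec.span B" using vec.span_insert by blast
        then show "x \<in> (\<lambda>(k,y). k *s a + y) ` (UNIV \<times> vec.span B)"
          by (auto intro!: image_eqI[where x="(k, x - k *s a)"])
      qed
    next
      show "(\<lambda>(k,y). k *s a + y) ` (UNIV \<times> vec.span B) \<subseteq> vec.span (insert a B)"
      proof clarify
        fix k y assume "y \<in> vec.span B"
        then have "y \<in> vec.span (insert a B)" using vec.span_mono[of B "insert a B"] by blast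
        moreover have "k *s a \<in> vec.span (insert a B)" by (simp add: vec.span_base vec.span_scale)
        ultimately show "k *s a + y \<in> vec.span (insert a B)" by (simp add: vec.span_add)
      qed
    qed
    have inj: "inj_on (\<lambda>(k,y). k *s a + y) (UNIV \<times> vec.span B)"
    proof (rule inj_onI, clarify)
      fix k y k' y' assume y: "y \<in> vec.span B" and y': "y' \<in> vec.span B"
        and e: "k *s a + y = k' *s a + y'"
      have h: "(k - k') *s a = y' - y" using e by (simp add: algebra_simps vector_sub_rdistrib)
      have sp: "y' - y \<in> vec.span B" using y y' vec.span_diff by blast
      have "k = k'"
      proof (rule ccontr)
        assume ne: "k \<noteq> k'"
        have nz: "k - k' \<noteq> 0" using ne by simp
        have "a = inverse (k - k') *s ((k - k') *s a)"
          by (simp only: vector_smult_assoc left_inverse[OF nz] vector_smult_lid)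
        then have "a \<in> vec.span B" using h sp vec.span_scale by metis
        then show False using anot by blast
      qed
      then show "k = k' \<and> y = y'" using e by simp
    qed
    have "card (vec.span (insert a B)) = CARD('a) * card (vec.span B)"
      unfolding eq card_image[OF inj] by (simp add: card_cartesian_product)
    then show ?case using insert indB by simp
  qed
qed

lemma card_subspace:
  fixes S :: "('a::{field,finite}^'n) set"
  assumes "vec.subspace S"
  shows "card S = CARD('a) ^ vec.dim S"
proof -
  obtain B where B: "B \<subseteq> S" "vec.independent B" "S \<subseteq> vec.span B" "card B = vec.dim S"
    using vec.basis_exists by blast
  have "vec.span B = S" using vec.span_subspace B assms by blast
  then show ?thesis using card_span_indep B by metis
qed


definition indep_over :: "('a::{field,finite}^'n) set \<Rightarrow> ('a^'n) set \<Rightarrow> ('a^'n) list \<Rightarrow> bool" where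
  "indep_over W S vs \<longleftrightarrow> (\<forall>i<length vs. vs!i \<in> S \<and> vs!i \<notin> vec.span (W \<union> set (take i vs)))"

lemma indep_over_Nil[simp]: "indep_over W S []"
  by (simp add: indep_over_def)

lemma indep_over_snoc:
  "indep_over W S (vs@[v]) \<longleftrightarrow> indep_over W S vs \<and> v \<in> S \<and> v \<notin> vec.span (W \<union> set vs)"
proof
  assume h: "indep_over W S (vs@[v])"
  have "indep_over W S vs" unfolding indep_over_def
  proof (intro allI impI)
    fix i assume "i < length vs"
    then show "vs ! i \<in> S \<and> vs ! i \<notin> vec.span (W \<union> set (take i vs))"
      using h[unfolded indep_over_def, rule_format, of i] by (simp add: nth_append)
  qed
  moreover have "v \<in> S \<and> v \<notin> vec.span (W \<union> set vs)"
    using h[unfolded indep_over_def, rule_format, of "length vs"] by simp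
  ultimately show "indep_over W S vs \<and> v \<in> S \<and> v \<notin> vec.span (W \<union> set vs)" by blast
next
  assume h: "indep_over W S vs \<and> v \<in> S \<and> v \<notin> vec.span (W \<union> set vs)"
  show "indep_over W S (vs@[v])" unfolding indep_over_def
  proof (intro allI impI)
    fix i assume i: "i < length (vs@[v])"
    show "(vs@[v]) ! i \<in> S \<and> (vs@[v]) ! i \<notin> vec.span (W \<union> set (take i (vs@[v])))"
    proof (cases "i < length vs")
      case True
      then show ?thesis using h[THEN conjunct1, unfolded indep_over_def, rule_format, of i]
        by (simp add: nth_append)
    next
      case False
      then have "i = length vs" using i by simp
      then show ?thesis using h by simp
    qed
  qed
qed

lemma indep_over_set:
  assumes "indep_over W S vs" shows "set vs \<subseteq> S"
  using assms unfolding indep_over_def by (auto simp: in_set_conv_nth)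

lemma dim_over:
  fixes W :: "('a::{field,finite}^'n) set"
  assumes "vec.subspace W" "indep_over W S vs"
  shows "vec.dim (vec.span (W \<union> set vs)) = vec.dim W + length vs"
  using assms(2)
proof (induction vs rule: rev_induct)
  case Nil
  then show ?case using assms(1) by (simp add: vec.span_eq_iff)
next
  case (snoc v vs)
  have h: "indep_over W S vs" "v \<notin> vec.span (W \<union> set vs)"
    using snoc.prems indep_over_snoc by blast+
  have "W \<union> set (vs @ [v]) = insert v (W \<union> set vs)" by auto
  then have "vec.dim (vec.span (W \<union> set (vs @ [v]))) = vec.dim (insert v (W \<union> set vs))"
    by simp
  also have "\<dots> = vec.dim (W \<union> set vs) + 1" using h(2) by (simp add: vec.dim_insert)
  finally show ?case using snoc.IH[OF h(1)] by simp
qed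

lemma span_over_sub:
  fixes W :: "('a::{field,finite}^'n) set"
  assumes "vec.subspace S" "W \<subseteq> S" "indep_over W S vs"
  shows "vec.span (W \<union> set vs) \<subseteq> S"
  using assms indep_over_set vec.span_minimal by (metis Un_least)

definition LS :: "('a::{field,finite}^'n) set \<Rightarrow> ('a^'n) set \<Rightarrow> nat \<Rightarrow> ('a^'n) list set" where
  "LS W S k = {vs. length vs = k \<and> indep_over W S vs}"

lemma finite_LS: "finite (LS W S k)"
proof -
  have "LS W S k \<subseteq> {xs. set xs \<subseteq> UNIV \<and> length xs = k}" unfolding LS_def by auto
  moreover have "finite {xs. set xs \<subseteq> (UNIV::('a^'n) set) \<and> length xs = k}"
    by (rule finite_lists_length_eq) simp
  ultimately show ?thesis by (rule finite_subset)
qed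

lemma card_LS:
  fixes W :: "('a::{field,finite}^'n) set"
  assumes W: "vec.subspace W" and S: "vec.subspace S" and WS: "W \<subseteq> S"
  shows "card (LS W S k) = (\<Prod>i<k. CARD('a) ^ vec.dim S - CARD('a) ^ (vec.dim W + i))"
proof (induction k)
  case 0
  have "LS W S 0 = {[]}" unfolding LS_def by auto
  then show ?case by simp
next
  case (Suc k)
  let ?f = "\<lambda>(vs,v). vs @ [v]"
  let ?A = "SIGMA vs:LS W S k. S - vec.span (W \<union> set vs)"
  have eq: "LS W S (Suc k) = ?f ` ?A"
  proof
    show "LS W S (Suc k) \<subseteq> ?f ` ?A"
    proof
      fix xs assume "xs \<in> LS W S (Suc k)"
      then have l: "length xs = Suc k" and i: "indep_over W S xs" unfolding LS_def by auto
      obtain vs v where xs: "xs = vs @ [v]" using l by (metis length_Suc_conv_rev)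
      have "indep_over W S vs \<and> v \<in> S \<and> v \<notin> vec.span (W \<union> set vs)"
        using i xs indep_over_snoc by blast
      then show "xs \<in> ?f ` ?A" using xs l unfolding LS_def by (auto intro!: image_eqI[where x="(vs,v)"])
    qed
  next
    show "?f ` ?A \<subseteq> LS W S (Suc k)"
      unfolding LS_def using indep_over_snoc by auto
  qed
  have inj: "inj_on ?f ?A" by (auto intro!: inj_onI)
  have c: "card (S - vec.span (W \<union> set vs)) = CARD('a) ^ vec.dim S - CARD('a) ^ (vec.dim W + k)"
    if "vs \<in> LS W S k" for vs
  proof -
    have i: "indep_over W S vs" "length vs = k" using that unfolding LS_def by auto
    have sub: "vec.span (W \<union> set vs) \<subseteq> S" using span_over_sub[OF S WS i(1)] .
    have "card (S - vec.span (W \<union> set vs)) = card S - card (vec.span (W \<union> set vs))"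
      by (rule card_Diff_subset[OF finite sub])
    also have "\<dots> = CARD('a) ^ vec.dim S - CARD('a) ^ (vec.dim W + k)"
      using card_subspace[OF S] card_subspace[OF vec.subspace_span[of "W \<union> set vs"]]
        dim_over[OF W i(1)] i(2) by simp
    finally show ?thesis .
  qed
  have "card (LS W S (Suc k)) = card ?A" unfolding eq card_image[OF inj] ..
  also have "\<dots> = (\<Sum>vs\<in>LS W S k. card (S - vec.span (W \<union> set vs)))"
    by (rule card_SigmaI[OF finite_LS]) simp
  also have "\<dots> = card (LS W S k) * (CARD('a) ^ vec.dim S - CARD('a) ^ (vec.dim W + k))"
    using c by simp
  finally show ?case using Suc.IH by (simp add: mult.commute)
qed


lemma card_field_ge2: "CARD('a::{field,finite}) \<ge> 2"
proof -
  have "card {0::'a, 1} \<le> CARD('a)" by (rule card_mono) auto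
  then show ?thesis by simp
qed

lemma indep_over_change:
  assumes "indep_over W S vs" "set vs \<subseteq> T" shows "indep_over W T vs"
  using assms unfolding indep_over_def by (meson nth_mem subsetD)

lemma span_over_eq:
  fixes W :: "('a::{field,finite}^'n) set"
  assumes W: "vec.subspace W" and U: "vec.subspace U" and WU: "W \<subseteq> U"
    and d: "vec.dim U = vec.dim W + length vs" and i: "indep_over W U vs"
  shows "vec.span (W \<union> set vs) = U"
proof (rule vec.subspace_dim_equal)
  show "vec.subspace (vec.span (W \<union> set vs))" by (rule vec.subspace_span)
  show "vec.subspace U" by fact
  show "vec.span (W \<union> set vs) \<subseteq> U" using span_over_sub[OF U WU i] .
  show "vec.dim U \<le> vec.dim (vec.span (W \<union> set vs))" using dim_over[OF W i] d by simp
qed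

definition ISet :: "('a::{field,finite}^'n) set \<Rightarrow> ('a^'n) set \<Rightarrow> nat \<Rightarrow> ('a^'n) set set" where
  "ISet W S m = {U. vec.subspace U \<and> W \<subseteq> U \<and> U \<subseteq> S \<and> vec.dim U = m}"

lemma finite_ISet: "finite (ISet W S m)"
  by (rule finite_subset[of _ UNIV]) auto

lemma IS_count_nat:
  fixes W :: "('a::{field,finite}^'n) set"
  assumes W: "vec.subspace W" and S: "vec.subspace S" and WS: "W \<subseteq> S"
  shows "card (ISet W S (vec.dim W + k)) * (\<Prod>i<k. CARD('a) ^ (vec.dim W + k) - CARD('a) ^ (vec.dim W + i))
       = (\<Prod>i<k. CARD('a) ^ vec.dim S - CARD('a) ^ (vec.dim W + i))"
proof -
  let ?I = "ISet W S (vec.dim W + k)"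
  have eq: "LS W S k = (\<Union>U\<in>?I. LS W U k)"
  proof
    show "LS W S k \<subseteq> (\<Union>U\<in>?I. LS W U k)"
    proof
      fix vs assume "vs \<in> LS W S k"
      then have i: "indep_over W S vs" "length vs = k" unfolding LS_def by auto
      let ?U = "vec.span (W \<union> set vs)"
      have "?U \<in> ?I" unfolding ISet_def
        using span_over_sub[OF S WS i(1)] dim_over[OF W i(1)] i(2)
        by (auto simp: vec.span_superset[THEN subsetD] vec.subspace_span)
      moreover have "vs \<in> LS W ?U k" unfolding LS_def
        using i indep_over_change[OF i(1), of ?U] vec.span_superset[of "W \<union> set vs"] by auto
      ultimately show "vs \<in> (\<Union>U\<in>?I. LS W U k)" by blast
    qed
  next
    show "(\<Union>U\<in>?I. LS W U k) \<subseteq> LS W S k"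
      unfolding LS_def ISet_def using indep_over_set indep_over_change by fastforce
  qed
  have disj: "LS W U k \<inter> LS W U' k = {}" if "U \<in> ?I" "U' \<in> ?I" "U \<noteq> U'" for U U'
  proof (rule ccontr)
    assume "LS W U k \<inter> LS W U' k \<noteq> {}"
    then obtain vs where "vs \<in> LS W U k" "vs \<in> LS W U' k" by blast
    then have "vec.span (W \<union> set vs) = U" "vec.span (W \<union> set vs) = U'"
      using that span_over_eq[OF W] unfolding LS_def ISet_def by auto
    then show False using that by simp
  qed
  have "card (LS W S k) = (\<Sum>U\<in>?I. card (LS W U k))"
    unfolding eq by (rule card_UN_disjoint[OF finite_ISet]) (use finite_LS disj in auto)
  also have "\<dots> = (\<Sum>U\<in>?I. (\<Prod>i<k. CARD('a) ^ (vec.dim W + k) - CARD('a) ^ (vec.dim W + i)))"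
    by (rule sum.cong[OF refl]) (use card_LS[OF W] in \<open>auto simp: ISet_def\<close>)
  finally show ?thesis using card_LS[OF W S WS] by simp
qed

lemma gauss_shift:
  assumes "q \<ge> 2"
  shows "(\<Prod>i<k. (real q ^ (w+m) - real q ^ (w+i))) / (\<Prod>i<k. (real q ^ (w+k) - real q ^ (w+i)))
        = gauss_binom q m k"
proof -
  have "(\<Prod>i<k. (real q ^ (w+m) - real q ^ (w+i))) / (\<Prod>i<k. (real q ^ (w+k) - real q ^ (w+i)))
      = (\<Prod>i<k. (real q ^ (w+m) - real q ^ (w+i)) / (real q ^ (w+k) - real q ^ (w+i)))"
    by (rule prod_dividef[symmetric])
  also have "\<dots> = (\<Prod>i<k. (real q ^ m - real q ^ i) / (real q ^ k - real q ^ i))"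
  proof (rule prod.cong[OF refl])
    fix i
    have "real q ^ w > 0" "real q \<noteq> 0" using assms by simp_all
    then show "(real q ^ (w+m) - real q ^ (w+i)) / (real q ^ (w+k) - real q ^ (w+i))
        = (real q ^ m - real q ^ i) / (real q ^ k - real q ^ i)"
      by (simp add: power_add right_diff_distrib[symmetric])
  qed
  finally show ?thesis unfolding gauss_binom_def .
qed

lemma IS_count:
  fixes W :: "('a::{field,finite}^'n) set"
  assumes W: "vec.subspace W" and S: "vec.subspace S" and WS: "W \<subseteq> S"
    and k: "vec.dim W + k \<le> vec.dim S"
  shows "real (card (ISet W S (vec.dim W + k))) = gauss_binom CARD('a) (vec.dim S - vec.dim W) k"
proof -
  let ?q = "CARD('a)" let ?w = "vec.dim W" let ?s = "vec.dim S"
  have q2: "?q \<ge> 2" by (rule card_field_ge2)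
  have r1: "real (\<Prod>i<k. ?q ^ (?w + k) - ?q ^ (?w + i)) = (\<Prod>i<k. real ?q ^ (?w + k) - real ?q ^ (?w + i))"
    unfolding of_nat_prod
    by (rule prod.cong[OF refl], subst of_nat_diff) (use q2 in \<open>auto intro!: power_increasing\<close>)
  have r2: "real (\<Prod>i<k. ?q ^ ?s - ?q ^ (?w + i)) = (\<Prod>i<k. real ?q ^ ?s - real ?q ^ (?w + i))"
    unfolding of_nat_prod
    by (rule prod.cong[OF refl], subst of_nat_diff) (use q2 k in \<open>auto intro!: power_increasing\<close>)
  have nz: "(\<Prod>i<k. real ?q ^ (?w + k) - real ?q ^ (?w + i)) \<noteq> 0"
  proof -
    have "real ?q ^ (?w + i) < real ?q ^ (?w + k)" if "i < k" for i
      using q2 that by (intro power_strict_increasing) auto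
    then have "\<forall>i<k. real ?q ^ (?w + k) - real ?q ^ (?w + i) \<noteq> 0" by (metis less_irrefl right_minus_eq)
    then show ?thesis by (simp add: prod_zero_iff)
  qed
  have "real (card (ISet W S (?w + k))) * (\<Prod>i<k. real ?q ^ (?w + k) - real ?q ^ (?w + i))
        = (\<Prod>i<k. real ?q ^ ?s - real ?q ^ (?w + i))"
    using arg_cong[OF IS_count_nat[OF W S WS, of k], of real] r1 r2 by simp
  then have "real (card (ISet W S (?w + k))) = (\<Prod>i<k. real ?q ^ ?s - real ?q ^ (?w + i)) / (\<Prod>i<k. real ?q ^ (?w + k) - real ?q ^ (?w + i))"
    using nz by (simp add: field_simps)
  also have "\<dots> = gauss_binom ?q (?s - ?w) k"
    using gauss_shift[OF q2, of ?w "?s - ?w" k] k by simp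
  finally show ?thesis .
qed


definition qfact :: "nat \<Rightarrow> nat \<Rightarrow> real" where
  "qfact q j = (\<Prod>i<j. real q ^ (i+1) - 1)"

lemma qfact_pos: "q \<ge> 2 \<Longrightarrow> qfact q j > 0"
  unfolding qfact_def
proof (rule prod_pos)
  fix i assume "q \<ge> 2"
  then have "real q ^ 1 \<le> real q ^ (i+1)" by (intro power_increasing) auto
  then have "real q \<le> real q ^ (i+1)" by simp
  moreover have "real q \<ge> 2" using \<open>q \<ge> 2\<close> by simp
  ultimately show "0 < real q ^ (i+1) - 1" by linarith
qed

lemma qfact_split:
  assumes "k \<le> m"
  shows "qfact q (m - k) * (\<Prod>i<k. real q ^ (m - i) - 1) = qfact q m"
  using assms
proof (induction k)
  case 0 then show ?case by simp
next
  case (Suc k)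
  have e: "m - k = Suc (m - Suc k)" using Suc.prems by simp
  have g: "qfact q (Suc j) = qfact q j * (real q ^ (Suc j) - 1)" for j
    unfolding qfact_def by simp
  have "qfact q (m - k) = qfact q (m - Suc k) * (real q ^ (m - k) - 1)"
    using g[of "m - Suc k"] e by simp
  then show ?case using Suc by (simp add: mult_ac)
qed

lemma gauss_qfact:
  assumes q: "q \<ge> 2" and km: "k \<le> m"
  shows "gauss_binom q m k = qfact q m / (qfact q k * qfact q (m - k))"
proof -
  have "gauss_binom q m k = (\<Prod>i<k. (real q ^ (m - i) - 1) / (real q ^ (k - i) - 1))"
    unfolding gauss_binom_def
  proof (rule prod.cong[OF refl])
    fix i assume "i \<in> {..<k}"
    then have i: "i < k" "i \<le> m" using km by auto
    have p: "real q ^ i > 0" "q \<noteq> 0" using q by simp_all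
    have "real q ^ m - real q ^ i = real q ^ i * (real q ^ (m - i) - 1)"
      using i by (simp add: right_diff_distrib power_add[symmetric])
    moreover have "real q ^ k - real q ^ i = real q ^ i * (real q ^ (k - i) - 1)"
      using i by (simp add: right_diff_distrib power_add[symmetric])
    ultimately show "(real q ^ m - real q ^ i) / (real q ^ k - real q ^ i)
        = (real q ^ (m - i) - 1) / (real q ^ (k - i) - 1)" using p by simp
  qed
  also have "\<dots> = (\<Prod>i<k. real q ^ (m - i) - 1) / (\<Prod>i<k. real q ^ (k - i) - 1)"
    by (rule prod_dividef)
  also have "(\<Prod>i<k. real q ^ (k - i) - 1) = qfact q k"
    unfolding qfact_def
    by (rule prod.nat_diff_reindex[symmetric, THEN trans]) (rule prod.cong, auto simp: Suc_diff_Suc)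
  also have "(\<Prod>i<k. real q ^ (m - i) - 1) = qfact q m / qfact q (m - k)"
    using qfact_split[OF km, of q] qfact_pos[OF q, of "m-k"] by (simp add: field_simps)
  finally show ?thesis by simp
qed

lemma gauss_sym:
  assumes "q \<ge> 2" "k \<le> m"
  shows "gauss_binom q m (m - k) = gauss_binom q m k"
  using assms by (simp add: gauss_qfact mult.commute)

lemma gauss_one: "gauss_binom q m 1 = (real q ^ m - 1) / (real q - 1)"
  by (simp add: gauss_binom_def)

lemma gauss_pos:
  assumes "q \<ge> 2" "k \<le> m" shows "gauss_binom q m k > 0"
  using assms by (simp add: gauss_qfact qfact_pos)


lemma span_Un_subspaces:
  fixes A :: "('a::{field,finite}^'n) set"
  assumes "vec.subspace A" "vec.subspace B"
  shows "vec.span (A \<union> B) = {x + y |x y. x \<in> A \<and> y \<in> B}"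
  using assms by (simp add: vec.span_Un vec.span_eq_iff[THEN iffD2])

lemma dim_sum:
  fixes A :: "('a::{field,finite}^'n) set"
  assumes "vec.subspace A" "vec.subspace B"
  shows "vec.dim (vec.span (A \<union> B)) + vec.dim (A \<inter> B) = vec.dim A + vec.dim B"
  using vec.dim_sums_Int[OF assms] span_Un_subspaces[OF assms] by simp

lemma modular:
  fixes A :: "('a::{field,finite}^'n) set"
  assumes A: "vec.subspace A" and B: "vec.subspace B" and X: "vec.subspace X" and AX: "A \<subseteq> X"
  shows "X \<inter> vec.span (A \<union> B) = vec.span (A \<union> (X \<inter> B))"
proof
  have XB: "vec.subspace (X \<inter> B)" using X B vec.subspace_inter by blast
  show "X \<inter> vec.span (A \<union> B) \<subseteq> vec.span (A \<union> (X \<inter> B))"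
  proof
    fix z assume z: "z \<in> X \<inter> vec.span (A \<union> B)"
    then obtain a b where ab: "z = a + b" "a \<in> A" "b \<in> B" using span_Un_subspaces[OF A B] by blast
    have "b = z - a" using ab by simp
    then have "b \<in> X" using z ab AX X vec.subspace_diff by blast
    then show "z \<in> vec.span (A \<union> (X \<inter> B))" using span_Un_subspaces[OF A XB] ab by blast
  qed
next
  show "vec.span (A \<union> (X \<inter> B)) \<subseteq> X \<inter> vec.span (A \<union> B)"
    using vec.span_minimal[of "A \<union> (X \<inter> B)" X] AX X vec.span_mono[of "A \<union> (X \<inter> B)" "A \<union> B"] by blast
qed

lemma Esub_iff: "U \<in> Esub r \<longleftrightarrow> vec.subspace U \<and> vec.dim U = r"
  by (simp add: Esub_def)

lemma dim_inter_le:
  fixes U :: "('a::{field,finite}^'n) set"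
  shows "vec.dim (U \<inter> V) \<le> vec.dim U"
  by (rule vec.dim_subset) blast

lemma dI_eq:
  fixes U :: "('a::{field,finite}^'n) set"
  assumes "U \<in> Esub r" "V \<in> Esub r"
  shows "dI U V = r - vec.dim (U \<inter> V)"
  using dim_sum[of U V] assms unfolding dI_def Esub_iff by auto

lemma dI_sym:
  fixes U :: "('a::{field,finite}^'n) set"
  assumes "U \<in> Esub r" "V \<in> Esub r"
  shows "dI U V = dI V U"
  using assms by (simp add: dI_eq Int_commute)

lemma dI_le:
  fixes U :: "('a::{field,finite}^'n) set"
  assumes "U \<in> Esub r" "V \<in> Esub r"
  shows "dI U V \<le> r"
  using assms by (simp add: dI_eq)

lemma dI_zero_iff:
  fixes U :: "('a::{field,finite}^'n) set"
  assumes U: "U \<in> Esub r" and V: "V \<in> Esub r"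
  shows "dI U V = 0 \<longleftrightarrow> U = V"
proof
  assume "dI U V = 0"
  then have d: "vec.dim (U \<inter> V) = r"
    using dI_eq[OF U V] dim_inter_le[of U V] U unfolding Esub_iff by auto
  have s: "vec.subspace (U \<inter> V)" using U V vec.subspace_inter unfolding Esub_iff by blast
  have "U \<inter> V = U" by (rule vec.subspace_dim_equal) (use s d U in \<open>auto simp: Esub_iff\<close>)
  moreover have "U \<inter> V = V" by (rule vec.subspace_dim_equal) (use s d V in \<open>auto simp: Esub_iff\<close>)
  ultimately show "U = V" by simp
next
  assume "U = V" then show "dI U V = 0" using dI_eq[OF U V] U by (simp add: Esub_iff)
qed

lemma dI_triangle:
  fixes x :: "('a::{field,finite}^'n) set"
  assumes x: "x \<in> Esub r" and y: "y \<in> Esub r" and z: "z \<in> Esub r"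
  shows "dI x z \<le> dI x y + dI y z"
proof -
  have sx: "vec.subspace x" and sy: "vec.subspace y" and sz: "vec.subspace z"
    using x y z by (auto simp: Esub_iff)
  have A: "vec.subspace (x \<inter> y)" and B: "vec.subspace (y \<inter> z)"
    using sx sy sz vec.subspace_inter by blast+
  have "vec.dim (vec.span ((x \<inter> y) \<union> (y \<inter> z))) \<le> vec.dim y"
    using vec.dim_subset[of "vec.span ((x \<inter> y) \<union> (y \<inter> z))" y] vec.span_minimal[of "(x \<inter> y) \<union> (y \<inter> z)" y] sy by auto
  moreover have "vec.dim ((x \<inter> y) \<inter> (y \<inter> z)) \<le> vec.dim (x \<inter> z)"
    by (rule vec.dim_subset) blast
  moreover note dim_sum[OF A B]
  moreover have "vec.dim (x \<inter> y) \<le> r" "vec.dim (y \<inter> z) \<le> r" "vec.dim (x \<inter> z) \<le> r"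
    using dim_inter_le[of x] dim_inter_le[of y] x y by (auto simp: Esub_iff)
  ultimately show ?thesis using y by (simp add: dI_eq[OF x y] dI_eq[OF y z] dI_eq[OF x z] Esub_iff)
qed

lemma finite_Esub: "finite (Esub r :: ('a::{field,finite}^'n) set set)"
  by (rule finite_subset[of _ UNIV]) auto


lemma indep_over_monoW:
  fixes W :: "('a::{field,finite}^'n) set"
  assumes "W' \<subseteq> W" "indep_over W S vs" shows "indep_over W' S vs"
proof -
  have "vec.span (W' \<union> set (take i vs)) \<subseteq> vec.span (W \<union> set (take i vs))" for i
    by (rule vec.span_mono) (use assms(1) in blast)
  then show ?thesis using assms(2) unfolding indep_over_def by blast
qed

lemma span_span_Un:
  fixes D :: "('a::{field,finite}^'n) set"
  assumes "D \<subseteq> c" "vec.subspace c"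
  shows "vec.span (vec.span (D \<union> T) \<union> c) = vec.span (c \<union> T)"
proof
  have "vec.span (D \<union> T) \<subseteq> vec.span (c \<union> T)" using assms(1) by (intro vec.span_mono) blast
  moreover have "c \<subseteq> vec.span (c \<union> T)" using vec.span_superset by blast
  ultimately show "vec.span (vec.span (D \<union> T) \<union> c) \<subseteq> vec.span (c \<union> T)"
    by (intro vec.span_minimal) (auto simp: vec.subspace_span)
next
  have "T \<subseteq> vec.span (D \<union> T)" using vec.span_superset by blast
  then have "c \<union> T \<subseteq> vec.span (D \<union> T) \<union> c" by blast
  then show "vec.span (c \<union> T) \<subseteq> vec.span (vec.span (D \<union> T) \<union> c)"
    by (intro vec.span_minimal) (auto simp: vec.subspace_span intro: vec.span_superset[THEN subsetD])
qed

definition FD :: "nat \<Rightarrow> ('a::{field,finite}^'n) set \<Rightarrow> ('a^'n) set \<Rightarrow> ('a^'n) set set" where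
  "FD r c D = {U \<in> Esub r. U \<inter> c = D}"

lemma FD_count_nat:
  fixes c :: "('a::{field,finite}^'n) set"
  assumes c: "c \<in> Esub r" and D: "vec.subspace D" "D \<subseteq> c" "vec.dim D = r - d" and dr: "d \<le> r"
  shows "card (FD r c D) * (\<Prod>i<d. CARD('a) ^ r - CARD('a) ^ (r - d + i))
       = (\<Prod>i<d. CARD('a) ^ CARD('n) - CARD('a) ^ (r + i))"
proof -
  have sc: "vec.subspace c" "vec.dim c = r" using c by (auto simp: Esub_iff)
  let ?phi = "\<lambda>vs. vec.span (D \<union> set vs)"
  have a: "?phi vs \<in> FD r c D" and b: "vs \<in> LS D (?phi vs) d" if "vs \<in> LS c UNIV d" for vs
  proof -
    have i: "indep_over c UNIV vs" "length vs = d" using that unfolding LS_def by auto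
    have iD: "indep_over D UNIV vs" using indep_over_monoW[OF D(2) i(1)] .
    have dphi: "vec.dim (?phi vs) = r" using dim_over[OF D(1) iD] i(2) D(3) dr by simp
    have sphi: "vec.subspace (?phi vs)" by (rule vec.subspace_span)
    have "vec.dim (vec.span (c \<union> set vs)) = r + d" using dim_over[OF sc(1) i(1)] sc(2) i(2) by simp
    then have "vec.dim (vec.span (?phi vs \<union> c)) = r + d" using span_span_Un[OF D(2) sc(1)] by simp
    then have dint: "vec.dim (?phi vs \<inter> c) = r - d" using dim_sum[OF sphi sc(1)] dphi sc(2) dr by simp
    have "D = ?phi vs \<inter> c"
    proof (rule vec.subspace_dim_equal)
      show "vec.subspace D" by fact
      show "vec.subspace (?phi vs \<inter> c)" using sphi sc(1) vec.subspace_inter by blast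
      show "D \<subseteq> ?phi vs \<inter> c" using D(2) vec.span_superset[of "D \<union> set vs"] by blast
      show "vec.dim (?phi vs \<inter> c) \<le> vec.dim D" using dint D(3) by simp
    qed
    then show "?phi vs \<in> FD r c D" unfolding FD_def Esub_iff using sphi dphi by simp
    show "vs \<in> LS D (?phi vs) d" unfolding LS_def
      using i(2) indep_over_change[OF iD, of "?phi vs"] vec.span_superset[of "D \<union> set vs"] by auto
  qed
  have cc: "vs \<in> LS c UNIV d \<and> ?phi vs = U" if U: "U \<in> FD r c D" and vs: "vs \<in> LS D U d" for U vs
  proof -
    have sU: "vec.subspace U" "vec.dim U = r" "U \<inter> c = D" using U unfolding FD_def Esub_iff by auto
    have i: "indep_over D U vs" "length vs = d" using vs unfolding LS_def by auto
    have DU: "D \<subseteq> U" using sU(3) by blast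
    have phi: "?phi vs = U"
      by (rule span_over_eq[OF D(1) sU(1) DU _ i(1)]) (use sU D dr i in simp)
    have "indep_over c UNIV vs" unfolding indep_over_def
    proof (intro allI impI conjI)
      fix j assume j: "j < length vs"
      show "vs ! j \<in> UNIV" by simp
      have vj: "vs ! j \<in> U" "vs ! j \<notin> vec.span (D \<union> set (take j vs))"
        using i(1) j unfolding indep_over_def by auto
      show "vs ! j \<notin> vec.span (c \<union> set (take j vs))"
      proof
        assume "vs ! j \<in> vec.span (c \<union> set (take j vs))"
        then have "vs ! j \<in> {x + y |x y. x \<in> vec.span c \<and> y \<in> vec.span (set (take j vs))}"
          by (simp only: vec.span_Un)
        then obtain x y where xy: "vs ! j = x + y" "x \<in> vec.span c" "y \<in> vec.span (set (take j vs))"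
          by blast
        have xc: "x \<in> c" using xy(2) sc(1) by (simp add: vec.span_eq_iff[THEN iffD2])
        have "set (take j vs) \<subseteq> U" using indep_over_set[OF i(1)] set_take_subset[of j vs] by (rule order_trans[rotated])
        then have "vec.span (set (take j vs)) \<subseteq> U" using vec.span_minimal[OF _ sU(1)] by simp
        then have yU: "y \<in> U" using xy(3) by (rule subsetD)
        have "x = vs ! j - y" using xy by simp
        then have "x \<in> U" using vec.subspace_diff[OF sU(1) vj(1) yU] by simp
        then have "x \<in> D" using xc sU(3) by blast
        then have "x \<in> vec.span (D \<union> set (take j vs))" using vec.span_superset by blast
        moreover have "y \<in> vec.span (D \<union> set (take j vs))"
          using xy(3) vec.span_mono[of "set (take j vs)" "D \<union> set (take j vs)"] by blast
        ultimately have "x + y \<in> vec.span (D \<union> set (take j vs))" by (rule vec.span_add)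
        then have "vs ! j \<in> vec.span (D \<union> set (take j vs))" using xy(1) by simp
        then show False using vj(2) by blast
      qed
    qed
    then show ?thesis using phi i(2) unfolding LS_def by simp
  qed
  have eq: "LS c UNIV d = (\<Union>U\<in>FD r c D. LS D U d)"
  proof
    show "LS c UNIV d \<subseteq> (\<Union>U\<in>FD r c D. LS D U d)"
    proof
      fix vs assume h: "vs \<in> LS c UNIV d"
      show "vs \<in> (\<Union>U\<in>FD r c D. LS D U d)" by (rule UN_I[where B="\<lambda>U. LS D U d", OF a[OF h] b[OF h]])
    qed
    show "(\<Union>U\<in>FD r c D. LS D U d) \<subseteq> LS c UNIV d"
    proof
      fix vs assume "vs \<in> (\<Union>U\<in>FD r c D. LS D U d)"
      then obtain U where "U \<in> FD r c D" "vs \<in> LS D U d" by (rule UN_E)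
      then show "vs \<in> LS c UNIV d" using cc by simp
    qed
  qed
  have disj: "LS D U d \<inter> LS D U' d = {}" if "U \<in> FD r c D" "U' \<in> FD r c D" "U \<noteq> U'" for U U'
  proof (rule ccontr)
    assume "LS D U d \<inter> LS D U' d \<noteq> {}"
    then obtain vs where v1: "vs \<in> LS D U d" and v2: "vs \<in> LS D U' d" by blast
    have "?phi vs = U" using cc[OF that(1) v1] by simp
    moreover have "?phi vs = U'" using cc[OF that(2) v2] by simp
    ultimately show False using that by simp
  qed
  have finFD: "finite (FD r c D)" by (rule finite_subset[of _ UNIV]) auto
  have "card (LS c UNIV d) = (\<Sum>U\<in>FD r c D. card (LS D U d))"
    unfolding eq by (rule card_UN_disjoint[OF finFD]) (use finite_LS disj in auto)
  also have "\<dots> = (\<Sum>U\<in>FD r c D. (\<Prod>i<d. CARD('a) ^ r - CARD('a) ^ (r - d + i)))"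
  proof (rule sum.cong[OF refl])
    fix U assume U: "U \<in> FD r c D"
    have sU: "vec.subspace U" "vec.dim U = r" "D \<subseteq> U" using U unfolding FD_def Esub_iff by auto
    show "card (LS D U d) = (\<Prod>i<d. CARD('a) ^ r - CARD('a) ^ (r - d + i))"
      using card_LS[OF D(1) sU(1) sU(3), of d] sU(2) D(3) by simp
  qed
  moreover have "card (cart_basis :: ('a^'n) set) = CARD('n)" using vec_dim_card vec.dim_UNIV by metis
  ultimately show ?thesis using card_LS[OF sc(1) vec.subspace_UNIV, of d] sc(2) by simp
qed


lemma FD_real:
  fixes c :: "('a::{field,finite}^'n) set"
  assumes c: "c \<in> Esub r" and D: "vec.subspace D" "D \<subseteq> c" "vec.dim D = r - d"
    and dr: "d \<le> r" and rn: "r + d \<le> CARD('n)"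
  shows "real (card (FD r c D)) = real CARD('a) ^ (d^2) * gauss_binom CARD('a) (CARD('n) - r) d"
proof -
  let ?q = "CARD('a)" let ?n = "CARD('n)"
  have q2: "?q \<ge> 2" by (rule card_field_ge2)
  have r1: "real (\<Prod>i<d. ?q ^ r - ?q ^ (r - d + i)) = (\<Prod>i<d. real ?q ^ (r - d + d) - real ?q ^ (r - d + i))"
    unfolding of_nat_prod
    by (rule prod.cong[OF refl], subst of_nat_diff) (use q2 dr in \<open>auto intro!: power_increasing\<close>)
  have r2: "real (\<Prod>i<d. ?q ^ ?n - ?q ^ (r + i)) = (\<Prod>i<d. real ?q ^ ?n - real ?q ^ (r + i))"
    unfolding of_nat_prod
    by (rule prod.cong[OF refl], subst of_nat_diff) (use q2 rn in \<open>auto intro!: power_increasing\<close>)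
  have r3: "(\<Prod>i<d. real ?q ^ ?n - real ?q ^ (r + i))
      = (real ?q ^ d) ^ d * (\<Prod>i<d. real ?q ^ (r - d + (?n - r)) - real ?q ^ (r - d + i))"
  proof -
    have "(\<Prod>i<d. real ?q ^ ?n - real ?q ^ (r + i))
        = (\<Prod>i<d. real ?q ^ d * (real ?q ^ (r - d + (?n - r)) - real ?q ^ (r - d + i)))"
    proof (rule prod.cong[OF refl])
      fix i
      have "?n = d + (r - d + (?n - r))" "r + i = d + (r - d + i)" using dr rn by auto
      then show "real ?q ^ ?n - real ?q ^ (r + i)
          = real ?q ^ d * (real ?q ^ (r - d + (?n - r)) - real ?q ^ (r - d + i))"
        by (metis power_add right_diff_distrib)
    qed
    also have "\<dots> = (real ?q ^ d) ^ d * (\<Prod>i<d. real ?q ^ (r - d + (?n - r)) - real ?q ^ (r - d + i))"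
      by (simp add: prod.distrib)
    finally show ?thesis .
  qed
  have nz: "(\<Prod>i<d. real ?q ^ (r - d + d) - real ?q ^ (r - d + i)) \<noteq> 0"
  proof -
    have "real ?q ^ (r - d + i) < real ?q ^ (r - d + d)" if "i < d" for i
      using q2 that by (intro power_strict_increasing) auto
    then have "\<forall>i<d. real ?q ^ (r - d + d) - real ?q ^ (r - d + i) \<noteq> 0" by (metis less_irrefl right_minus_eq)
    then show ?thesis by (simp add: prod_zero_iff)
  qed
  have "real (card (FD r c D)) * (\<Prod>i<d. real ?q ^ (r - d + d) - real ?q ^ (r - d + i))
      = (real ?q ^ d) ^ d * (\<Prod>i<d. real ?q ^ (r - d + (?n - r)) - real ?q ^ (r - d + i))"
    using arg_cong[OF FD_count_nat[OF c D dr], of real] r1 r2 r3 by simp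
  then have "real (card (FD r c D)) = (real ?q ^ d) ^ d * ((\<Prod>i<d. real ?q ^ (r - d + (?n - r)) - real ?q ^ (r - d + i))
        / (\<Prod>i<d. real ?q ^ (r - d + d) - real ?q ^ (r - d + i)))"
    using nz by (simp add: field_simps)
  also have "\<dots> = (real ?q ^ d) ^ d * gauss_binom ?q (?n - r) d"
    using gauss_shift[OF q2, of "r - d" "?n - r" d] by simp
  finally show ?thesis by (simp add: power_mult[symmetric] power2_eq_square)
qed

lemma sphere_count:
  fixes c :: "('a::{field,finite}^'n) set"
  assumes c: "c \<in> Esub r" and dr: "d \<le> r" and rn: "r + d \<le> CARD('n)"
  shows "real (card {U \<in> Esub r. dI U c = d}) = NC CARD('a) CARD('n) r d"
proof -
  let ?q = "CARD('a)" let ?n = "CARD('n)"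
  have q2: "?q \<ge> 2" by (rule card_field_ge2)
  have sc: "vec.subspace c" "vec.dim c = r" using c by (auto simp: Esub_iff)
  let ?Ds = "ISet {0} c (r - d)"
  have eq: "{U \<in> Esub r. dI U c = d} = (\<Union>D\<in>?Ds. FD r c D)"
  proof
    show "{U \<in> Esub r. dI U c = d} \<subseteq> (\<Union>D\<in>?Ds. FD r c D)"
    proof
      fix U assume U: "U \<in> {U \<in> Esub r. dI U c = d}"
      then have U1: "U \<in> Esub r" "dI U c = d" by auto
      have sU: "vec.subspace U" "vec.dim U = r" using U1 by (auto simp: Esub_iff)
      have "vec.dim (U \<inter> c) \<le> r" using dim_inter_le[of U c] sU by simp
      then have dd: "vec.dim (U \<inter> c) = r - d" using dI_eq[OF U1(1) c] U1(2) by simp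
      have "U \<inter> c \<in> ?Ds" unfolding ISet_def
        using dd sU sc vec.subspace_inter vec.subspace_0 by blast
      moreover have "U \<in> FD r c (U \<inter> c)" unfolding FD_def using U1 by simp
      ultimately show "U \<in> (\<Union>D\<in>?Ds. FD r c D)" by blast
    qed
  next
    show "(\<Union>D\<in>?Ds. FD r c D) \<subseteq> {U \<in> Esub r. dI U c = d}"
    proof
      fix U assume "U \<in> (\<Union>D\<in>?Ds. FD r c D)"
      then obtain D where D: "D \<in> ?Ds" "U \<in> FD r c D" by blast
      then have "U \<in> Esub r" "vec.dim (U \<inter> c) = r - d" unfolding FD_def ISet_def by auto
      then show "U \<in> {U \<in> Esub r. dI U c = d}" using dI_eq[OF _ c] dr by simp
    qed
  qed
  have finD: "finite ?Ds" by (rule finite_ISet)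
  have "card {U \<in> Esub r. dI U c = d} = (\<Sum>D\<in>?Ds. card (FD r c D))"
    unfolding eq by (rule card_UN_disjoint[OF finD]) (auto intro: finite_subset[of _ UNIV] simp: FD_def)
  then have "real (card {U \<in> Esub r. dI U c = d}) = (\<Sum>D\<in>?Ds. real (card (FD r c D)))" by simp
  also have "\<dots> = (\<Sum>D\<in>?Ds. real ?q ^ (d^2) * gauss_binom ?q (?n - r) d)"
  proof (rule sum.cong[OF refl])
    fix D assume "D \<in> ?Ds"
    then have D: "vec.subspace D" "D \<subseteq> c" "vec.dim D = r - d" unfolding ISet_def by auto
    show "real (card (FD r c D)) = real ?q ^ (d^2) * gauss_binom ?q (?n - r) d"
      by (rule FD_real[OF c D dr rn])
  qed
  also have "\<dots> = real (card ?Ds) * (real ?q ^ (d^2) * gauss_binom ?q (?n - r) d)" by simp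
  also have "real (card ?Ds) = gauss_binom ?q r d"
  proof -
    have "real (card (ISet {0} c (vec.dim {0::'a^'n} + (r - d)))) = gauss_binom ?q (vec.dim c - vec.dim {0::'a^'n}) (r - d)"
      by (rule IS_count) (use sc vec.subspace_0 in auto)
    then show ?thesis using sc gauss_sym[OF q2 dr] by simp
  qed
  finally show ?thesis unfolding NC_def by (simp add: mult_ac)
qed


lemma card_ISet_diff:
  assumes "B \<subseteq> A" "finite A"
  shows "real (card (A - B)) = real (card A) - real (card B)"
  using assms by (simp add: card_Diff_subset finite_subset of_nat_diff card_mono)

lemma cj_count:
  fixes x :: "('a::{field,finite}^'n) set"
  assumes x: "x \<in> Esub r" and c: "c \<in> Esub r" and j: "dI x c = j" "1 \<le> j"
  shows "real (card {y \<in> Esub r. dI x y = 1 \<and> dI y c = j - 1}) = cC CARD('a) j"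
proof -
  let ?q = "CARD('a)"
  have q2: "?q \<ge> 2" by (rule card_field_ge2)
  have sx: "vec.subspace x" "vec.dim x = r" using x by (auto simp: Esub_iff)
  have sc: "vec.subspace c" "vec.dim c = r" using c by (auto simp: Esub_iff)
  have sxc: "vec.subspace (x \<inter> c)" using sx sc vec.subspace_inter by blast
  have jr: "j \<le> r" using dI_le[OF x c] j by simp
  have dxc: "vec.dim (x \<inter> c) = r - j" using dI_eq[OF x c] j dim_inter_le[of x c] sx by simp
  let ?Hs = "ISet (x \<inter> c) x (r - 1)"
  let ?G = "\<lambda>H. ISet H (vec.span (H \<union> c)) r"
  have Hprops: "vec.subspace H" "H \<subseteq> x" "x \<inter> c \<subseteq> H" "vec.dim H = r - 1" if "H \<in> ?Hs" for H
    using that unfolding ISet_def by auto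
  have Hc: "H \<inter> c = x \<inter> c" if "H \<in> ?Hs" for H using Hprops[OF that] by blast
  have dHc: "vec.dim (vec.span (H \<union> c)) = r + j - 1" if "H \<in> ?Hs" for H
    using dim_sum[OF Hprops(1)[OF that] sc(1)] Hc[OF that] Hprops(4)[OF that] sc(2) dxc jr j(2) by simp
  have xy: "x \<inter> y = H" if H: "H \<in> ?Hs" and y: "y \<in> ?G H" for H y
  proof -
    have yy: "H \<subseteq> y" "y \<subseteq> vec.span (H \<union> c)" using y unfolding ISet_def by auto
    have "x \<inter> vec.span (H \<union> c) = vec.span (H \<union> (x \<inter> c))"
      by (rule modular[OF Hprops(1)[OF H] sc(1) sx(1) Hprops(2)[OF H]])
    also have "\<dots> = H" using Hprops[OF H] by (simp add: Un_absorb2 vec.span_eq_iff[THEN iffD2])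
    finally show ?thesis using yy Hprops(2)[OF H] by blast
  qed
  have eq: "{y \<in> Esub r. dI x y = 1 \<and> dI y c = j - 1} = (\<Union>H\<in>?Hs. ?G H)"
  proof
    show "(\<Union>H\<in>?Hs. ?G H) \<subseteq> {y \<in> Esub r. dI x y = 1 \<and> dI y c = j - 1}"
    proof
      fix y assume "y \<in> (\<Union>H\<in>?Hs. ?G H)"
      then obtain H where H: "H \<in> ?Hs" and y: "y \<in> ?G H" by blast
      have yy: "vec.subspace y" "H \<subseteq> y" "y \<subseteq> vec.span (H \<union> c)" "vec.dim y = r"
        using y unfolding ISet_def by auto
      have yE: "y \<in> Esub r" using yy by (simp add: Esub_iff)
      have "dI x y = 1" using dI_eq[OF x yE] xy[OF H y] Hprops(4)[OF H] jr j(2) by simp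
      moreover have "vec.span (y \<union> c) = vec.span (H \<union> c)"
      proof
        show "vec.span (y \<union> c) \<subseteq> vec.span (H \<union> c)"
          using yy(3) vec.span_superset[of "H \<union> c"] by (intro vec.span_minimal) (auto simp: vec.subspace_span)
        show "vec.span (H \<union> c) \<subseteq> vec.span (y \<union> c)" using yy(2) by (intro vec.span_mono) blast
      qed
      then have "vec.dim (y \<inter> c) = r - j + 1"
        using dim_sum[OF yy(1) sc(1)] dHc[OF H] yy(4) sc(2) jr j(2) by simp
      then have "dI y c = j - 1" using dI_eq[OF yE c] jr j(2) by simp
      ultimately show "y \<in> {y \<in> Esub r. dI x y = 1 \<and> dI y c = j - 1}" using yE by simp
    qed
  next
    show "{y \<in> Esub r. dI x y = 1 \<and> dI y c = j - 1} \<subseteq> (\<Union>H\<in>?Hs. ?G H)"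
    proof
      fix y assume "y \<in> {y \<in> Esub r. dI x y = 1 \<and> dI y c = j - 1}"
      then have yE: "y \<in> Esub r" and d1: "dI x y = 1" and d2: "dI y c = j - 1" by auto
      have sy: "vec.subspace y" "vec.dim y = r" using yE by (auto simp: Esub_iff)
      let ?H = "x \<inter> y"
      have sH: "vec.subspace ?H" using sx sy vec.subspace_inter by blast
      have dH: "vec.dim ?H = r - 1" using dI_eq[OF x yE] d1 dim_inter_le[of x y] sx by simp
      have syc: "vec.subspace (y \<inter> c)" using sy sc vec.subspace_inter by blast
      have dyc: "vec.dim (y \<inter> c) = r - j + 1"
        using dI_eq[OF yE c] d2 dim_inter_le[of y c] sy jr j(2) by simp
      have s1: "vec.subspace (vec.span (?H \<union> (y \<inter> c)))" by (rule vec.subspace_span)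
      have sub1: "vec.span (?H \<union> (y \<inter> c)) \<subseteq> y" using sy(1) by (intro vec.span_minimal) auto
      have le1: "vec.dim (vec.span (?H \<union> (y \<inter> c))) \<le> r"
        using vec.dim_subset[OF sub1] sy by simp
      have ds: "vec.dim (vec.span (?H \<union> (y \<inter> c))) + vec.dim (?H \<inter> (y \<inter> c)) = (r - 1) + (r - j + 1)"
        using dim_sum[OF sH syc] dH dyc by simp
      have s2: "vec.subspace (?H \<inter> (y \<inter> c))" using sH syc vec.subspace_inter by blast
      have "?H \<inter> (y \<inter> c) = x \<inter> c"
      proof (rule vec.subspace_dim_equal[OF s2 sxc])
        show "?H \<inter> (y \<inter> c) \<subseteq> x \<inter> c" by blast
        show "vec.dim (x \<inter> c) \<le> vec.dim (?H \<inter> (y \<inter> c))" using ds le1 dxc jr j(2) by simp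
      qed
      then have xcH: "x \<inter> c \<subseteq> ?H" by blast
      have "vec.dim (?H \<inter> (y \<inter> c)) = r - j" using \<open>?H \<inter> (y \<inter> c) = x \<inter> c\<close> dxc by simp
      then have "vec.dim (vec.span (?H \<union> (y \<inter> c))) = r" using ds jr j(2) by simp
      then have "vec.span (?H \<union> (y \<inter> c)) = y"
        using vec.subspace_dim_equal[OF s1 sy(1) sub1] sy by simp
      then have "y \<subseteq> vec.span (?H \<union> c)" using vec.span_mono[of "?H \<union> (y \<inter> c)" "?H \<union> c"] by blast
      then have "y \<in> ?G ?H" unfolding ISet_def using sy by blast
      moreover have "?H \<in> ?Hs" unfolding ISet_def using sH xcH dH by blast
      ultimately show "y \<in> (\<Union>H\<in>?Hs. ?G H)" by blast
    qed
  qed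
  have disj: "?G H \<inter> ?G H' = {}" if "H \<in> ?Hs" "H' \<in> ?Hs" "H \<noteq> H'" for H H'
  proof (rule ccontr)
    assume "?G H \<inter> ?G H' \<noteq> {}"
    then obtain y where "y \<in> ?G H" "y \<in> ?G H'" by blast
    then have "x \<inter> y = H" "x \<inter> y = H'" using xy that by blast+
    then show False using that by simp
  qed
  have "card {y \<in> Esub r. dI x y = 1 \<and> dI y c = j - 1} = (\<Sum>H\<in>?Hs. card (?G H))"
    unfolding eq by (rule card_UN_disjoint[OF finite_ISet]) (use finite_ISet disj in auto)
  then have "real (card {y \<in> Esub r. dI x y = 1 \<and> dI y c = j - 1}) = (\<Sum>H\<in>?Hs. real (card (?G H)))"
    by simp
  also have "\<dots> = (\<Sum>H\<in>?Hs. gauss_binom ?q j 1)"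
  proof (rule sum.cong[OF refl])
    fix H assume H: "H \<in> ?Hs"
    have "real (card (ISet H (vec.span (H \<union> c)) (vec.dim H + 1))) = gauss_binom ?q (vec.dim (vec.span (H \<union> c)) - vec.dim H) 1"
      by (rule IS_count) (use Hprops[OF H] dHc[OF H] jr j(2) in \<open>auto simp: vec.subspace_span intro: vec.span_superset[THEN subsetD]\<close>)
    then show "real (card (?G H)) = gauss_binom ?q j 1"
      using Hprops(4)[OF H] dHc[OF H] jr j(2) by simp
  qed
  also have "\<dots> = real (card ?Hs) * gauss_binom ?q j 1" by simp
  also have "real (card ?Hs) = gauss_binom ?q j 1"
  proof -
    have "real (card (ISet (x \<inter> c) x (vec.dim (x \<inter> c) + (j - 1)))) = gauss_binom ?q (vec.dim x - vec.dim (x \<inter> c)) (j - 1)"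
      by (rule IS_count[OF sxc sx(1)]) (use dxc sx jr j(2) in auto)
    then show ?thesis using dxc sx jr j(2) gauss_sym[OF q2, of 1 j] by simp
  qed
  finally show ?thesis unfolding cC_def by (simp add: power2_eq_square)
qed


lemma gauss_one_diff:
  assumes "q \<ge> 2" "a \<le> b"
  shows "gauss_binom q b 1 - gauss_binom q a 1 = real q ^ a * gauss_binom q (b - a) 1"
proof -
  have "real q ^ b = real q ^ a * real q ^ (b - a)" using assms(2) by (simp add: power_add[symmetric])
  moreover have g: "gauss_binom q m 1 = (real q ^ m - 1) / (real q - 1)" for m by (simp add: gauss_binom_def)
  ultimately show ?thesis by (simp add: diff_divide_distrib[symmetric] right_diff_distrib)
qed

lemma card_diff_real:
  assumes "B \<subseteq> A" "finite A"
  shows "real (card (A - B)) = real (card A) - real (card B)"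
  using assms by (simp add: card_Diff_subset finite_subset of_nat_diff card_mono)

lemma bj_count:
  fixes x :: "('a::{field,finite}^'n) set"
  assumes x: "x \<in> Esub r" and c: "c \<in> Esub r" and j: "dI x c = j" "j < r" and rn: "2 * r \<le> CARD('n)"
  shows "real (card {y \<in> Esub r. dI x y = 1 \<and> dI y c = j + 1}) = bC CARD('a) CARD('n) r j"
proof -
  let ?q = "CARD('a)" let ?n = "CARD('n)"
  have q2: "?q \<ge> 2" by (rule card_field_ge2)
  have cb: "card (cart_basis::('a^'n) set) = CARD('n)" using vec_dim_card vec.dim_UNIV by metis
  have sx: "vec.subspace x" "vec.dim x = r" using x by (auto simp: Esub_iff)
  have sc: "vec.subspace c" "vec.dim c = r" using c by (auto simp: Esub_iff)
  have sxc: "vec.subspace (x \<inter> c)" using sx sc vec.subspace_inter by blast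
  have dxc: "vec.dim (x \<inter> c) = r - j" using dI_eq[OF x c] j dim_inter_le[of x c] sx by simp
  let ?X = "vec.span (x \<union> c)"
  have sX: "vec.subspace ?X" by (rule vec.subspace_span)
  have dX: "vec.dim ?X = r + j" using dim_sum[OF sx(1) sc(1)] dxc sx sc j by simp
  have xX: "x \<subseteq> ?X" "c \<subseteq> ?X" using vec.span_superset[of "x \<union> c"] by auto
  let ?Hs = "ISet {0} x (r - 1) - ISet (x \<inter> c) x (r - 1)"
  let ?G = "\<lambda>H. ISet H UNIV r - ISet H ?X r"
  have Hprops: "vec.subspace H" "H \<subseteq> x" "\<not> x \<inter> c \<subseteq> H" "vec.dim H = r - 1" if "H \<in> ?Hs" for H
    using that unfolding ISet_def by auto
  have xy: "x \<inter> y = H" if H: "H \<in> ?Hs" and y: "y \<in> ?G H" for H y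
  proof -
    have yy: "vec.subspace y" "H \<subseteq> y" "vec.dim y = r" "\<not> y \<subseteq> ?X" using y unfolding ISet_def by auto
    have sxy: "vec.subspace (x \<inter> y)" using sx yy vec.subspace_inter by blast
    have ne: "x \<inter> y \<noteq> x"
    proof
      assume "x \<inter> y = x"
      then have "x \<subseteq> y" by blast
      then have "x = y" using vec.subspace_dim_equal[OF sx(1) yy(1)] sx yy by simp
      then show False using yy(4) xX by blast
    qed
    have "vec.dim (x \<inter> y) \<noteq> r"
      using ne vec.subspace_dim_equal[OF sxy sx(1)] sx by auto
    then have "vec.dim (x \<inter> y) \<le> r - 1" using dim_inter_le[of x y] sx by simp
    then show ?thesis
      using vec.subspace_dim_equal[OF Hprops(1)[OF H] sxy] Hprops[OF H] yy by (metis le_inf_iff order_refl)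
  qed
  have eq: "{y \<in> Esub r. dI x y = 1 \<and> dI y c = j + 1} = (\<Union>H\<in>?Hs. ?G H)"
  proof
    show "(\<Union>H\<in>?Hs. ?G H) \<subseteq> {y \<in> Esub r. dI x y = 1 \<and> dI y c = j + 1}"
    proof
      fix y assume "y \<in> (\<Union>H\<in>?Hs. ?G H)"
      then obtain H where H: "H \<in> ?Hs" and y: "y \<in> ?G H" by blast
      have yy: "vec.subspace y" "H \<subseteq> y" "vec.dim y = r" "\<not> y \<subseteq> ?X" using y unfolding ISet_def by auto
      have yE: "y \<in> Esub r" using yy by (simp add: Esub_iff)
      have r1: "1 \<le> r" using j by simp
      have "dI x y = 1" using dI_eq[OF x yE] xy[OF H y] Hprops(4)[OF H] r1 by simp
      moreover have "y \<inter> c \<subseteq> H"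
      proof
        fix z assume z: "z \<in> y \<inter> c"
        show "z \<in> H"
        proof (rule ccontr)
          assume zH: "z \<notin> H"
          have sp: "vec.span (insert z H) \<subseteq> y" using z yy by (intro vec.span_minimal) auto
          have "vec.dim (vec.span (insert z H)) = r"
            using zH Hprops[OF H] r1 by (simp add: vec.dim_insert vec.span_eq_iff[THEN iffD2])
          then have "vec.span (insert z H) = y"
            using vec.subspace_dim_equal[OF vec.subspace_span yy(1) sp] yy(3) by simp
          moreover have "vec.span (insert z H) \<subseteq> ?X"
            using z xX Hprops(2)[OF H] sX by (intro vec.span_minimal) auto
          ultimately show False using yy(4) by simp
        qed
      qed
      then have yc: "y \<inter> c = H \<inter> (x \<inter> c)" using yy(2) Hprops(2)[OF H] by blast
      have "vec.dim (H \<inter> (x \<inter> c)) = r - j - 1"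
      proof -
        obtain z where z: "z \<in> x \<inter> c" "z \<notin> H" using Hprops(3)[OF H] by blast
        have "vec.span (insert z H) \<subseteq> vec.span (H \<union> (x \<inter> c))" using z by (intro vec.span_mono) auto
        moreover have "vec.dim (vec.span (insert z H)) = r"
          using z Hprops[OF H] r1 by (simp add: vec.dim_insert vec.span_eq_iff[THEN iffD2])
        ultimately have "vec.dim (vec.span (H \<union> (x \<inter> c))) \<ge> r" by (metis vec.dim_subset)
        moreover have "vec.dim (vec.span (H \<union> (x \<inter> c))) \<le> r"
          using vec.dim_subset[OF vec.span_minimal[of "H \<union> (x \<inter> c)" x]] Hprops(2)[OF H] sx by auto
        ultimately show ?thesis using dim_sum[OF Hprops(1)[OF H] sxc] Hprops(4)[OF H] dxc r1 j by simp
      qed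
      then have "dI y c = j + 1" using dI_eq[OF yE c] yc j by simp
      ultimately show "y \<in> {y \<in> Esub r. dI x y = 1 \<and> dI y c = j + 1}" using yE by simp
    qed
  next
    show "{y \<in> Esub r. dI x y = 1 \<and> dI y c = j + 1} \<subseteq> (\<Union>H\<in>?Hs. ?G H)"
    proof
      fix y assume "y \<in> {y \<in> Esub r. dI x y = 1 \<and> dI y c = j + 1}"
      then have yE: "y \<in> Esub r" and d1: "dI x y = 1" and d2: "dI y c = j + 1" by auto
      have sy: "vec.subspace y" "vec.dim y = r" using yE by (auto simp: Esub_iff)
      let ?H = "x \<inter> y"
      have sH: "vec.subspace ?H" using sx sy vec.subspace_inter by blast
      have dH: "vec.dim ?H = r - 1" using dI_eq[OF x yE] d1 dim_inter_le[of x y] sx by simp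
      have dyc: "vec.dim (y \<inter> c) = r - j - 1"
        using dI_eq[OF yE c] d2 dim_inter_le[of y c] sy j by simp
      have n1: "\<not> x \<inter> c \<subseteq> ?H"
      proof
        assume "x \<inter> c \<subseteq> ?H"
        then have "x \<inter> c \<subseteq> y \<inter> c" by blast
        then have "vec.dim (x \<inter> c) \<le> vec.dim (y \<inter> c)" by (rule vec.dim_subset)
        then show False using dxc dyc j by simp
      qed
      have n2: "\<not> y \<subseteq> ?X"
      proof
        assume "y \<subseteq> ?X"
        then have "vec.span (y \<union> c) \<subseteq> ?X" using xX sX by (intro vec.span_minimal) auto
        then have "vec.dim (vec.span (y \<union> c)) \<le> r + j" using vec.dim_subset dX by metis
        moreover have "vec.dim (vec.span (y \<union> c)) = r + j + 1"
          using dim_sum[OF sy(1) sc(1)] dyc sy sc j by simp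
        ultimately show False by simp
      qed
      have "?H \<in> ?Hs" unfolding ISet_def using sH dH n1 vec.subspace_0 by auto
      moreover have "y \<in> ?G ?H" unfolding ISet_def using sy n2 by auto
      ultimately show "y \<in> (\<Union>H\<in>?Hs. ?G H)" by blast
    qed
  qed
  have disj: "?G H \<inter> ?G H' = {}" if "H \<in> ?Hs" "H' \<in> ?Hs" "H \<noteq> H'" for H H'
  proof (rule ccontr)
    assume "?G H \<inter> ?G H' \<noteq> {}"
    then obtain y where y1: "y \<in> ?G H" and y2: "y \<in> ?G H'" by blast
    have "x \<inter> y = H" using xy[OF that(1) y1] .
    moreover have "x \<inter> y = H'" using xy[OF that(2) y2] .
    ultimately show False using that by simp
  qed
  have finG: "finite (?G H)" for H using finite_ISet by blast
  have "card {y \<in> Esub r. dI x y = 1 \<and> dI y c = j + 1} = (\<Sum>H\<in>?Hs. card (?G H))"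
    unfolding eq by (rule card_UN_disjoint) (use finite_ISet finG disj in auto)
  then have "real (card {y \<in> Esub r. dI x y = 1 \<and> dI y c = j + 1}) = (\<Sum>H\<in>?Hs. real (card (?G H)))"
    by simp
  also have "\<dots> = (\<Sum>H\<in>?Hs. real ?q ^ (j + 1) * gauss_binom ?q (?n - r - j) 1)"
  proof (rule sum.cong[OF refl])
    fix H assume H: "H \<in> ?Hs"
    have r1: "1 \<le> r" using j by simp
    have HX: "H \<subseteq> ?X" using Hprops(2)[OF H] xX by blast
    have sub: "ISet H ?X r \<subseteq> ISet H UNIV r" unfolding ISet_def by auto
    have c1: "real (card (ISet H UNIV (vec.dim H + 1))) = gauss_binom ?q (vec.dim (UNIV::('a^'n) set) - vec.dim H) 1"
      by (rule IS_count) (use Hprops[OF H] rn r1 cb in \<open>auto simp: vec_dim_card\<close>)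
    have c2: "real (card (ISet H ?X (vec.dim H + 1))) = gauss_binom ?q (vec.dim ?X - vec.dim H) 1"
      by (rule IS_count[OF Hprops(1)[OF H] sX HX]) (use Hprops[OF H] dX r1 in simp)
    have "real (card (?G H)) = real (card (ISet H UNIV r)) - real (card (ISet H ?X r))"
      by (rule card_diff_real[OF sub finite_ISet])
    also have "\<dots> = gauss_binom ?q (?n - r + 1) 1 - gauss_binom ?q (j + 1) 1"
      using c1 c2 Hprops(4)[OF H] dX r1 rn cb by (simp add: vec_dim_card Suc_diff_le)
    also have "\<dots> = real ?q ^ (j + 1) * gauss_binom ?q (?n - r - j) 1"
      using gauss_one_diff[OF q2, of "j + 1" "?n - r + 1"] j rn by simp
    finally show "real (card (?G H)) = real ?q ^ (j + 1) * gauss_binom ?q (?n - r - j) 1" .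
  qed
  also have "\<dots> = real (card ?Hs) * (real ?q ^ (j + 1) * gauss_binom ?q (?n - r - j) 1)" by simp
  also have "real (card ?Hs) = real ?q ^ j * gauss_binom ?q (r - j) 1"
  proof -
    have r1: "1 \<le> r" using j by simp
    have sub: "ISet (x \<inter> c) x (r - 1) \<subseteq> ISet {0} x (r - 1)"
      unfolding ISet_def using vec.subspace_0 by auto
    have c1: "real (card (ISet {0} x (vec.dim {0::'a^'n} + (r - 1)))) = gauss_binom ?q (vec.dim x - vec.dim {0::'a^'n}) (r - 1)"
      by (rule IS_count) (use sx vec.subspace_0 in auto)
    have c2: "real (card (ISet (x \<inter> c) x (vec.dim (x \<inter> c) + (j - 1)))) = gauss_binom ?q (vec.dim x - vec.dim (x \<inter> c)) (j - 1)"
      by (rule IS_count[OF sxc sx(1)]) (use dxc sx j in auto)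
    have "real (card ?Hs) = real (card (ISet {0} x (r - 1))) - real (card (ISet (x \<inter> c) x (r - 1)))"
      by (rule card_diff_real[OF sub finite_ISet])
    also have "\<dots> = gauss_binom ?q r 1 - gauss_binom ?q j 1"
    proof (cases "j = 0")
      case True
      then have "x \<inter> c = x" using dxc sx vec.subspace_dim_equal[OF sxc sx(1)] by auto
      then have "ISet (x \<inter> c) x (r - 1) = {}" unfolding ISet_def using sx r1 by auto
      then show ?thesis using c1 sx True gauss_sym[OF q2 r1] by (simp add: gauss_binom_def)
    next
      case False
      then show ?thesis using c1 c2 sx dxc j gauss_sym[OF q2 r1] gauss_sym[OF q2, of 1 j] by simp
    qed
    also have "\<dots> = real ?q ^ j * gauss_binom ?q (r - j) 1"
      using gauss_one_diff[OF q2, of j r] j by simp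
    finally show ?thesis .
  qed
  moreover have pw: "real ?q ^ (2*j+1) = real ?q * (real ?q ^ j * real ?q ^ j)"
    by (simp add: power_add[symmetric] mult_2)
  ultimately show ?thesis unfolding bC_def by (simp add: pw mult_ac)
qed


locale covset =
  fixes X :: "'x set" and d :: "'x \<Rightarrow> 'x \<Rightarrow> nat" and C :: "'x set" and \<rho> :: nat
    and N1 b cp cr :: real
  assumes finX: "finite X" and CX: "C \<subseteq> X"
    and sym: "\<And>x y. x \<in> X \<Longrightarrow> y \<in> X \<Longrightarrow> d x y = d y x"
    and tri: "\<And>x y z. x \<in> X \<Longrightarrow> y \<in> X \<Longrightarrow> z \<in> X \<Longrightarrow> d x z \<le> d x y + d y z"
    and cov: "\<And>x. x \<in> X \<Longrightarrow> \<exists>c\<in>C. d x c \<le> \<rho>"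
    and rho1: "\<rho> \<ge> 1"
    and N1: "\<And>x. x \<in> X \<Longrightarrow> real (card {y\<in>X. d x y = 1}) = N1"
    and bb: "\<And>x c. x \<in> X \<Longrightarrow> c \<in> X \<Longrightarrow> d x c = \<rho> \<Longrightarrow> real (card {y\<in>X. d x y = 1 \<and> d y c = \<rho>+1}) = b"
    and cp: "\<And>x c. x \<in> X \<Longrightarrow> c \<in> X \<Longrightarrow> d x c = \<rho>+1 \<Longrightarrow> real (card {y\<in>X. d x y = 1 \<and> d y c = \<rho>}) = cp"
    and cr: "\<And>x c. x \<in> X \<Longrightarrow> c \<in> X \<Longrightarrow> d x c = \<rho> \<Longrightarrow> real (card {y\<in>X. d x y = 1 \<and> d y c = \<rho> - 1}) = cr"
    and cpp: "cp > 0"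
    and crN: "cr \<le> N1"
begin

definition "cnt y = card {c\<in>C. d y c \<le> \<rho>}"
definition "E y = real (cnt y) - 1"
definition "m y = card {c\<in>C. d y c = \<rho>}"
definition "A0 = {x\<in>X. cnt x = 1 \<and> m x = 1}"
definition "Nb x = {y\<in>X. d x y = 1}"
definition "eps = of_int \<lceil>b / cp\<rceil> * cp - b"

lemma finC: "finite C" using finX CX finite_subset by blast

lemma cnt_pos: "x \<in> X \<Longrightarrow> cnt x \<ge> 1"
  using cov[of x] finC unfolding cnt_def
  by (metis (mono_tags, lifting) One_nat_def Suc_leI card_gt_0_iff empty_iff finite_subset mem_Collect_eq subsetI)

lemma E_nonneg: "x \<in> X \<Longrightarrow> E x \<ge> 0"
  using cnt_pos unfolding E_def by fastforce

lemma eps_nonneg: "eps \<ge> 0"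
proof -
  have "b / cp \<le> of_int \<lceil>b / cp\<rceil>" by (rule le_of_int_ceiling)
  then have "b / cp * cp \<le> of_int \<lceil>b / cp\<rceil> * cp" using cpp by (intro mult_right_mono) auto
  then have "b \<le> of_int \<lceil>b / cp\<rceil> * cp" using cpp by simp
  then show ?thesis unfolding eps_def by simp
qed

lemma count_ind: "finite A \<Longrightarrow> real (card {a\<in>A. P a}) = (\<Sum>a\<in>A. if P a then 1 else 0)"
proof -
  assume "finite A"
  have "{a\<in>A. P a} = A \<inter> Collect P" by auto
  then show ?thesis using \<open>finite A\<close> by (simp add: sum.If_cases)
qed

lemma A0_bound:
  assumes x: "x \<in> A0"
  shows "eps \<le> (\<Sum>y\<in>Nb x. E y)"
proof -
  have xX: "x \<in> X" and c1: "cnt x = 1" and m1: "m x = 1" using x unfolding A0_def by auto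
  obtain c0 where c0: "{c\<in>C. d x c = \<rho>} = {c0}" using m1 unfolding m_def by (meson card_1_singletonE)
  have c0C: "c0 \<in> C" and dc0: "d x c0 = \<rho>" using c0 by auto
  have c0X: "c0 \<in> X" using c0C CX by blast
  have uniq: "c \<in> C \<Longrightarrow> d x c \<le> \<rho> \<Longrightarrow> c = c0" for c
  proof -
    assume c: "c \<in> C" "d x c \<le> \<rho>"
    have "{c\<in>C. d x c \<le> \<rho>} = {c0}"
    proof -
      obtain e where "{c\<in>C. d x c \<le> \<rho>} = {e}" using c1 unfolding cnt_def by (meson card_1_singletonE)
      moreover have "c0 \<in> {c\<in>C. d x c \<le> \<rho>}" using c0C dc0 by simp
      ultimately show ?thesis by (metis singletonD)
    qed
    then show "c = c0" using c by blast
  qed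
  let ?M = "{c\<in>C. d x c = \<rho>+1}"
  let ?f = "\<lambda>c. real (card {y\<in>Nb x. d y c \<le> \<rho>})"
  have finNb: "finite (Nb x)" using finX unfolding Nb_def by simp
  have NbX: "Nb x \<subseteq> X" unfolding Nb_def by auto
  have "(\<Sum>y\<in>Nb x. real (cnt y)) = (\<Sum>y\<in>Nb x. \<Sum>c\<in>C. if d y c \<le> \<rho> then 1 else 0)"
    unfolding cnt_def using count_ind[OF finC] by simp
  also have "\<dots> = (\<Sum>c\<in>C. \<Sum>y\<in>Nb x. if d y c \<le> \<rho> then 1 else 0)" by (rule sum.swap)
  also have "\<dots> = (\<Sum>c\<in>C. ?f c)" using count_ind[OF finNb] by simp
  finally have swap: "(\<Sum>y\<in>Nb x. real (cnt y)) = (\<Sum>c\<in>C. ?f c)" .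
  have fc0: "?f c0 = N1 - b"
  proof -
    have part: "Nb x = {y\<in>Nb x. d y c0 \<le> \<rho>} \<union> {y\<in>X. d x y = 1 \<and> d y c0 = \<rho>+1}"
    proof -
      have "d y c0 \<le> \<rho> + 1" if "y \<in> Nb x" for y
        using tri[of y x c0] that xX c0X sym[of y x] dc0 unfolding Nb_def by auto
      then show ?thesis unfolding Nb_def by fastforce
    qed
    have "real (card (Nb x)) = ?f c0 + real (card {y\<in>X. d x y = 1 \<and> d y c0 = \<rho>+1})"
      by (subst part, subst card_Un_disjoint) (use finNb finX in auto)
    then show ?thesis using N1[OF xX] bb[OF xX c0X dc0] unfolding Nb_def by simp
  qed
  have fM: "?f c = cp" if c: "c \<in> ?M" for c
  proof -
    have cX: "c \<in> X" using c CX by blast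
    have "{y\<in>Nb x. d y c \<le> \<rho>} = {y\<in>X. d x y = 1 \<and> d y c = \<rho>}"
    proof -
      have "d y c \<ge> \<rho>" if "y \<in> Nb x" for y
        using tri[of x y c] that xX cX c unfolding Nb_def by auto
      then show ?thesis unfolding Nb_def by fastforce
    qed
    then show ?thesis using cp[OF xX cX] c by simp
  qed
  have c0M: "c0 \<notin> ?M" using dc0 by simp
  have sub: "insert c0 ?M \<subseteq> C" using c0C by auto
  have "(\<Sum>c\<in>insert c0 ?M. ?f c) \<le> (\<Sum>c\<in>C. ?f c)"
    by (rule sum_mono2[OF finC sub]) simp
  moreover have "(\<Sum>c\<in>insert c0 ?M. ?f c) = ?f c0 + real (card ?M) * cp"
    using finC c0M fM by (simp add: sum.insert)
  ultimately have ge: "(\<Sum>y\<in>Nb x. real (cnt y)) \<ge> N1 - b + real (card ?M) * cp"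
    using swap fc0 by simp
  have finM: "finite ?M" using finC by simp
  have cover: "{y\<in>X. d x y = 1 \<and> d y c0 = \<rho>+1} \<subseteq> (\<Union>c\<in>?M. {y\<in>Nb x. d y c \<le> \<rho>})"
  proof
    fix y assume y: "y \<in> {y\<in>X. d x y = 1 \<and> d y c0 = \<rho>+1}"
    then have yX: "y \<in> X" by simp
    obtain c where c: "c \<in> C" "d y c \<le> \<rho>" using cov[OF yX] by blast
    have cX: "c \<in> X" using c CX by blast
    have "c \<noteq> c0" using c y by auto
    then have "\<not> d x c \<le> \<rho>" using uniq c by blast
    moreover have "d x c \<le> \<rho> + 1" using tri[OF xX yX cX] y c by simp
    ultimately have "c \<in> ?M" using c by simp
    then show "y \<in> (\<Union>c\<in>?M. {y\<in>Nb x. d y c \<le> \<rho>})" using y c unfolding Nb_def by blast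
  qed
  have "b = real (card {y\<in>X. d x y = 1 \<and> d y c0 = \<rho>+1})" using bb[OF xX c0X dc0] by simp
  also have "\<dots> \<le> real (card (\<Union>c\<in>?M. {y\<in>Nb x. d y c \<le> \<rho>}))"
    using cover by (intro of_nat_mono card_mono) (use finM finNb in auto)
  also have "\<dots> \<le> real (\<Sum>c\<in>?M. card {y\<in>Nb x. d y c \<le> \<rho>})"
    by (intro of_nat_mono card_UN_le finM)
  also have "\<dots> = real (card ?M) * cp" using fM by (simp add: of_nat_sum)
  finally have bM: "b \<le> real (card ?M) * cp" .
  have "b / cp \<le> of_int (int (card ?M))" using bM cpp by (simp add: divide_le_eq)
  then have "\<lceil>b / cp\<rceil> \<le> int (card ?M)" by (simp add: ceiling_le_iff)
  then have "of_int \<lceil>b / cp\<rceil> * cp \<le> real (card ?M) * cp"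
    using cpp by (intro mult_right_mono) (simp_all add: of_int_le_iff[symmetric])
  then have "N1 + eps \<le> (\<Sum>y\<in>Nb x. real (cnt y))" using ge unfolding eps_def by simp
  moreover have "(\<Sum>y\<in>Nb x. E y) = (\<Sum>y\<in>Nb x. real (cnt y)) - N1"
    unfolding E_def using N1[OF xX] by (simp add: sum_subtractf Nb_def)
  ultimately show ?thesis by simp
qed


lemma A0X: "A0 \<subseteq> X" unfolding A0_def by auto

lemma swap_A0:
  "(\<Sum>x\<in>A0. \<Sum>y\<in>Nb x. E y) = (\<Sum>y\<in>X. E y * real (card (Nb y \<inter> A0)))"
proof -
  have finA0: "finite A0" using finX A0X finite_subset by blast
  have "(\<Sum>x\<in>A0. \<Sum>y\<in>Nb x. E y) = (\<Sum>x\<in>A0. \<Sum>y\<in>X. if d x y = 1 then E y else 0)"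
    unfolding Nb_def using finX by (simp add: sum.inter_filter)
  also have "\<dots> = (\<Sum>y\<in>X. \<Sum>x\<in>A0. if d x y = 1 then E y else 0)" by (rule sum.swap)
  also have "\<dots> = (\<Sum>y\<in>X. E y * real (card (Nb y \<inter> A0)))"
  proof (rule sum.cong[OF refl])
    fix y assume yX: "y \<in> X"
    have "(\<Sum>x\<in>A0. if d x y = 1 then E y else 0) = E y * (\<Sum>x\<in>A0. if d y x = 1 then 1 else 0)"
      by (subst sum_distrib_left, rule sum.cong[OF refl]) (use sym yX A0X in auto)
    also have "(\<Sum>x\<in>A0. if d y x = 1 then 1 else 0) = real (card {x\<in>A0. d y x = 1})"
      using count_ind[OF finA0] by simp
    also have "{x\<in>A0. d y x = 1} = Nb y \<inter> A0" unfolding Nb_def using A0X by auto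
    finally show "(\<Sum>x\<in>A0. if d x y = 1 then E y else 0) = E y * real (card (Nb y \<inter> A0))" .
  qed
  finally show ?thesis .
qed

lemma Nb_A0_bound:
  assumes yX: "y \<in> X" and e: "cnt y \<ge> 2"
  shows "real (card (Nb y \<inter> A0)) \<le> N1 - cr"
proof (cases "\<exists>c1\<in>C. d y c1 = \<rho>")
  case True
  then obtain c1 where c1: "c1 \<in> C" "d y c1 = \<rho>" by blast
  have c1X: "c1 \<in> X" using c1 CX by blast
  let ?Z = "{x\<in>X. d y x = 1 \<and> d x c1 = \<rho> - 1}"
  have "Nb y \<inter> A0 \<subseteq> Nb y - ?Z"
  proof
    fix x assume x: "x \<in> Nb y \<inter> A0"
    have "x \<notin> ?Z"
    proof
      assume xZ: "x \<in> ?Z"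
      have xA: "cnt x = 1" "m x = 1" using x unfolding A0_def by auto
      have c1in: "c1 \<in> {c\<in>C. d x c \<le> \<rho>}" using xZ c1 by auto
      obtain e where "{c\<in>C. d x c \<le> \<rho>} = {e}" using xA(1) unfolding cnt_def by (meson card_1_singletonE)
      then have one: "{c\<in>C. d x c \<le> \<rho>} = {c1}" using c1in by auto
      have emp: "{c\<in>C. d x c = \<rho>} = {}"
      proof (rule ccontr)
        assume "{c\<in>C. d x c = \<rho>} \<noteq> {}"
        then obtain c where "c \<in> C" "d x c = \<rho>" by blast
        then have "c = c1" using one by auto
        then show False using xZ rho1 \<open>d x c = \<rho>\<close> by simp
      qed
      have "m x = 0" unfolding m_def emp by simp
      then show False using xA(2) by simp
    qed
    then show "x \<in> Nb y - ?Z" using x by blast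
  qed
  moreover have "?Z \<subseteq> Nb y" unfolding Nb_def by auto
  moreover have "finite (Nb y)" unfolding Nb_def using finX by simp
  ultimately have "card (Nb y \<inter> A0) \<le> card (Nb y - ?Z)"
    by (intro card_mono) auto
  also have "card (Nb y - ?Z) = card (Nb y) - card ?Z"
    using \<open>?Z \<subseteq> Nb y\<close> \<open>finite (Nb y)\<close> by (intro card_Diff_subset) (auto intro: finite_subset)
  finally have "card (Nb y \<inter> A0) \<le> card (Nb y) - card ?Z" .
  moreover have "card ?Z \<le> card (Nb y)" using \<open>?Z \<subseteq> Nb y\<close> \<open>finite (Nb y)\<close> card_mono by blast
  ultimately have "real (card (Nb y \<inter> A0)) \<le> real (card (Nb y)) - real (card ?Z)" by linarith
  then show ?thesis using N1[OF yX] cr[OF yX c1X c1(2)] unfolding Nb_def by simp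
next
  case False
  let ?S = "{c\<in>C. d y c \<le> \<rho>}"
  have S2: "card ?S \<ge> 2" using e unfolding cnt_def .
  then have "?S \<noteq> {}" by (metis card.empty not_numeral_le_zero)
  then obtain c1 where c1: "c1 \<in> ?S" by blast
  have "card (?S - {c1}) \<ge> 1" using S2 c1 finC by (simp add: card_Diff_singleton)
  then have "?S - {c1} \<noteq> {}" by (metis card.empty not_one_le_zero)
  then obtain c2 where c2: "c2 \<in> ?S - {c1}" by blast
  have c12: "c1 \<in> C" "c2 \<in> C" "c1 \<noteq> c2" "d y c1 \<le> \<rho>" "d y c2 \<le> \<rho>" using c1 c2 by auto
  have "d y c1 \<noteq> \<rho>" "d y c2 \<noteq> \<rho>" using False c12 by auto
  then have lt: "d y c1 \<le> \<rho> - 1" "d y c2 \<le> \<rho> - 1" using c12 by auto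
  have "Nb y \<inter> A0 = {}"
  proof (rule ccontr)
    assume "Nb y \<inter> A0 \<noteq> {}"
    then obtain x where x: "x \<in> Nb y" "x \<in> A0" by blast
    have xX: "x \<in> X" and dxy: "d x y = 1" using x yX sym unfolding Nb_def by auto
    have "d x c1 \<le> \<rho>" "d x c2 \<le> \<rho>"
      using tri[OF xX yX, of c1] tri[OF xX yX, of c2] c12 CX dxy lt rho1 by auto
    then have "{c1, c2} \<subseteq> {c\<in>C. d x c \<le> \<rho>}" using c12 by auto
    then have "card {c1, c2} \<le> cnt x" unfolding cnt_def using finC by (intro card_mono) auto
    then show False using x c12 unfolding A0_def by simp
  qed
  then show ?thesis using crN by simp
qed

lemma m_bound:
  assumes xX: "x \<in> X"
  shows "real (m x) \<le> (if x \<in> A0 then 1 else 0) + 2 * E x"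
proof -
  have "m x \<le> cnt x" unfolding m_def cnt_def using finC by (intro card_mono) auto
  moreover have "cnt x \<ge> 1" using cnt_pos[OF xX] .
  ultimately show ?thesis unfolding E_def A0_def using xX by auto
qed


theorem main_bound:
  assumes V: "\<And>c. c \<in> C \<Longrightarrow> real (card {y\<in>X. d y c \<le> \<rho>}) = V"
    and Nr: "\<And>c. c \<in> C \<Longrightarrow> real (card {y\<in>X. d y c = \<rho>}) = Nr"
    and dpos: "N1 - cr + 2 * eps > 0"
  shows "real (card X) \<le> real (card C) * (V - eps / (N1 - cr + 2 * eps) * Nr)"
proof -
  define \<delta> where "\<delta> = N1 - cr + 2 * eps"
  define SE where "SE = (\<Sum>y\<in>X. E y)"
  have finA0: "finite A0" using finX A0X finite_subset by blast
  have s1: "(\<Sum>y\<in>X. real (cnt y)) = real (card C) * V"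
  proof -
    have "(\<Sum>y\<in>X. real (cnt y)) = (\<Sum>y\<in>X. \<Sum>c\<in>C. if d y c \<le> \<rho> then 1 else 0)"
      unfolding cnt_def using count_ind[OF finC] by simp
    also have "\<dots> = (\<Sum>c\<in>C. \<Sum>y\<in>X. if d y c \<le> \<rho> then 1 else 0)" by (rule sum.swap)
    also have "\<dots> = (\<Sum>c\<in>C. V)" using count_ind[OF finX] V by simp
    finally show ?thesis by simp
  qed
  have SEeq: "SE = real (card C) * V - real (card X)"
    unfolding SE_def E_def using s1 by (simp add: sum_subtractf)
  have s2: "(\<Sum>x\<in>X. real (m x)) = real (card C) * Nr"
  proof -
    have "(\<Sum>x\<in>X. real (m x)) = (\<Sum>y\<in>X. \<Sum>c\<in>C. if d y c = \<rho> then 1 else 0)"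
      unfolding m_def using count_ind[OF finC] by simp
    also have "\<dots> = (\<Sum>c\<in>C. \<Sum>y\<in>X. if d y c = \<rho> then 1 else 0)" by (rule sum.swap)
    also have "\<dots> = (\<Sum>c\<in>C. Nr)" using count_ind[OF finX] Nr by simp
    finally show ?thesis by simp
  qed
  have s3: "eps * real (card A0) \<le> (N1 - cr) * SE"
  proof -
    have "eps * real (card A0) = (\<Sum>x\<in>A0. eps)" by simp
    also have "\<dots> \<le> (\<Sum>x\<in>A0. \<Sum>y\<in>Nb x. E y)" by (rule sum_mono) (rule A0_bound)
    also have "\<dots> = (\<Sum>y\<in>X. E y * real (card (Nb y \<inter> A0)))" by (rule swap_A0)
    also have "\<dots> \<le> (\<Sum>y\<in>X. E y * (N1 - cr))"
    proof (rule sum_mono)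
      fix y assume yX: "y \<in> X"
      show "E y * real (card (Nb y \<inter> A0)) \<le> E y * (N1 - cr)"
      proof (cases "cnt y \<ge> 2")
        case True
        then show ?thesis using Nb_A0_bound[OF yX True] E_nonneg[OF yX] by (intro mult_left_mono)
      next
        case False
        then have "cnt y = 1" using cnt_pos[OF yX] by simp
        then show ?thesis unfolding E_def by simp
      qed
    qed
    also have "\<dots> = (N1 - cr) * SE" unfolding SE_def by (simp add: sum_distrib_left mult.commute)
    finally show ?thesis .
  qed
  have s4: "(\<Sum>x\<in>X. real (m x)) \<le> real (card A0) + 2 * SE"
  proof -
    have "(\<Sum>x\<in>X. real (m x)) \<le> (\<Sum>x\<in>X. (if x \<in> A0 then 1 else 0) + 2 * E x)"
      by (rule sum_mono) (rule m_bound)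
    also have "\<dots> = (\<Sum>x\<in>X. if x \<in> A0 then 1 else 0) + 2 * SE"
      unfolding SE_def by (simp add: sum.distrib sum_distrib_left)
    also have "(\<Sum>x\<in>X. if x \<in> A0 then (1::real) else 0) = real (card A0)"
    proof -
      have "{x\<in>X. x \<in> A0} = A0" using A0X by auto
      then show ?thesis using count_ind[OF finX, of "\<lambda>x. x \<in> A0"] by simp
    qed
    finally show ?thesis .
  qed
  have "eps * (real (card C) * Nr) \<le> eps * (real (card A0) + 2 * SE)"
    using s2 s4 eps_nonneg by (intro mult_left_mono) auto
  also have "\<dots> \<le> \<delta> * SE" using s3 unfolding \<delta>_def by (simp add: algebra_simps)
  finally have k: "eps * (real (card C) * Nr) \<le> \<delta> * SE" .
  have dp: "\<delta> > 0" using dpos unfolding \<delta>_def .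
  have "eps / \<delta> * (real (card C) * Nr) \<le> SE"
    using k dp by (simp add: divide_le_eq mult.commute mult.left_commute)
  then have "real (card X) \<le> real (card C) * V - eps / \<delta> * (real (card C) * Nr)"
    using SEeq by simp
  then show ?thesis unfolding \<delta>_def by (simp add: algebra_simps)
qed

end


lemma card_Esub:
  assumes "r \<le> CARD('n)"
  shows "real (card (Esub r :: ('a::{field,finite}^'n) set set)) = gauss_binom CARD('a) CARD('n) r"
proof -
  have cb: "card (cart_basis::('a^'n) set) = CARD('n)" using vec_dim_card vec.dim_UNIV by metis
  have e: "ISet {0} UNIV (vec.dim {0::'a^'n} + r) = (Esub r :: ('a^'n) set set)"
    unfolding ISet_def Esub_def using vec.subspace_0 by auto
  have "real (card (ISet {0::'a^'n} UNIV (vec.dim {0::'a^'n} + r))) = gauss_binom CARD('a) (vec.dim (UNIV::('a^'n) set) - vec.dim {0::'a^'n}) r"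
    by (rule IS_count) (use assms cb vec.subspace_0 in auto)
  then show ?thesis using e cb by simp
qed

lemma covrad_le_iff:
  fixes C :: "('a::{field,finite}^'n) set set"
  assumes "C \<noteq> {}" "Esub r \<noteq> ({} :: ('a^'n) set set)"
  shows "covrad r C \<le> \<rho> \<longleftrightarrow> (\<forall>U\<in>Esub r. \<exists>D\<in>C. dI U D \<le> \<rho>)"
proof -
  have finC: "finite C" by (rule finite_subset[of _ UNIV]) auto
  have m: "{dI U D |D. D \<in> C} = dI U ` C" for U by auto
  have mm: "Min {dI U D |D. D \<in> C} \<le> \<rho> \<longleftrightarrow> (\<exists>D\<in>C. dI U D \<le> \<rho>)" for U
    unfolding m using finC assms(1) by (simp add: Min_le_iff)
  have s: "{Min {dI U D |D. D \<in> C} |U. U \<in> (Esub r :: ('a^'n) set set)} = (\<lambda>U. Min {dI U D |D. D \<in> C}) ` Esub r"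
    by auto
  show ?thesis unfolding covrad_def s using finite_Esub assms(2) mm by (simp add: Max_le_iff)
qed

lemma gauss1_mono:
  assumes "q \<ge> 2" "a \<le> b" shows "gauss_binom q a 1 \<le> gauss_binom q b 1"
proof -
  have "real q ^ a \<le> real q ^ b" using assms by (intro power_increasing) auto
  moreover have "real q - 1 > 0" using assms by simp
  ultimately show ?thesis unfolding gauss_one by (simp add: divide_right_mono)
qed

theorem proposition7:
  fixes r \<rho> :: nat
  defines "q \<equiv> CARD('a::{field,finite})"
    and "n \<equiv> CARD('n::finite)"
  defines "\<epsilon> \<equiv> of_int \<lceil>bC q n r \<rho> / cC q (\<rho>+1)\<rceil> * cC q (\<rho>+1) - bC q n r \<rho>"
  defines "\<delta> \<equiv> NC q n r 1 - cC q \<rho> + 2 * \<epsilon>"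
  assumes "r \<le> n div 2" and "0 < \<rho>" and "\<rho> < r"
  shows "real (KC TYPE('a) TYPE('n) r \<rho>)
           \<ge> gauss_binom q n r / (VC q n r \<rho> - \<epsilon> / \<delta> * NC q n r \<rho>)"
proof -
  have q2: "q \<ge> 2" unfolding q_def by (rule card_field_ge2)
  have rn: "2 * r \<le> n" using assms(5) by simp
  have rho1: "\<rho> \<ge> 1" using assms(6) by simp
  let ?X = "Esub r :: ('a^'n) set set"
  have cardX: "real (card ?X) = gauss_binom q n r" using card_Esub[of r, where 'a='a and 'n='n] rn unfolding q_def n_def by simp
  have Xpos: "real (card ?X) > 0" using cardX gauss_pos[OF q2, of r n] rn by simp
  then have Xne: "?X \<noteq> {}" by auto
  have ex: "\<exists>k. \<exists>C. C \<subseteq> ?X \<and> C \<noteq> {} \<and> card C = k \<and> covrad r C \<le> \<rho>"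
  proof -
    have "covrad r ?X \<le> \<rho>" using covrad_le_iff[OF Xne Xne] dI_zero_iff by fastforce
    then show ?thesis using Xne by blast
  qed
  obtain C where C: "C \<subseteq> ?X" "C \<noteq> {}" "card C = KC TYPE('a) TYPE('n) r \<rho>" "covrad r C \<le> \<rho>"
    using LeastI_ex[OF ex] unfolding KC_def by blast
  have cov: "\<forall>U\<in>?X. \<exists>D\<in>C. dI U D \<le> \<rho>" using covrad_le_iff[OF C(2) Xne] C(4) by blast
  have g1pos: "gauss_binom q m 1 > 0" if "m \<ge> 1" for m using gauss_pos[OF q2 that] .
  have cppos: "cC q (\<rho>+1) > 0" unfolding cC_def using g1pos[of "\<rho>+1"] by simp
  have crlt: "cC q \<rho> < NC q n r 1"
  proof -
    have a: "gauss_binom q \<rho> 1 \<le> gauss_binom q r 1" using gauss1_mono[OF q2] assms by simp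
    have b: "gauss_binom q r 1 \<le> gauss_binom q (n - r) 1" using gauss1_mono[OF q2] rn by simp
    have g0: "gauss_binom q \<rho> 1 \<ge> 0" using g1pos[OF rho1] by simp
    have gr: "gauss_binom q r 1 > 0" using g1pos assms(7) rho1 by simp
    have gnr: "gauss_binom q (n - r) 1 > 0" using g1pos assms(7) rho1 rn by simp
    have "cC q \<rho> \<le> gauss_binom q r 1 * gauss_binom q (n - r) 1"
      unfolding cC_def power2_eq_square using a b g0 gr by (intro mult_mono) auto
    also have "\<dots> < real q * (gauss_binom q r 1 * gauss_binom q (n - r) 1)"
      using q2 gr gnr by simp
    finally show ?thesis unfolding NC_def gauss_binom_def[of q _ 0] by (simp add: gauss_binom_def[of q r 1] gauss_binom_def[of q "n-r" 1] mult_ac)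
  qed
  interpret cs: covset ?X dI C \<rho> "NC q n r 1" "bC q n r \<rho>" "cC q (\<rho>+1)" "cC q \<rho>"
  proof
    show "finite ?X" by (rule finite_Esub)
    show "C \<subseteq> ?X" by fact
    show "\<And>x y. x \<in> ?X \<Longrightarrow> y \<in> ?X \<Longrightarrow> dI x y = dI y x" by (rule dI_sym)
    show "\<And>x y z. x \<in> ?X \<Longrightarrow> y \<in> ?X \<Longrightarrow> z \<in> ?X \<Longrightarrow> dI x z \<le> dI x y + dI y z" by (rule dI_triangle)
    show "\<And>x. x \<in> ?X \<Longrightarrow> \<exists>c\<in>C. dI x c \<le> \<rho>" using cov by blast
    show "\<rho> \<ge> 1" by fact
    show "real (card {y\<in>?X. dI x y = 1}) = NC q n r 1" if x: "x \<in> ?X" for x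
    proof -
      have "{y\<in>?X. dI x y = 1} = {y\<in>?X. dI y x = 1}" using dI_sym[OF x] by auto
      then show ?thesis using sphere_count[OF x, of 1] rn assms(7) unfolding q_def n_def by simp
    qed
    show "real (card {y\<in>?X. dI x y = 1 \<and> dI y c = \<rho>+1}) = bC q n r \<rho>"
      if "x \<in> ?X" "c \<in> ?X" "dI x c = \<rho>" for x c
      using bj_count[OF that] assms(7) rn unfolding q_def n_def by simp
    show "real (card {y\<in>?X. dI x y = 1 \<and> dI y c = \<rho>}) = cC q (\<rho>+1)"
      if "x \<in> ?X" "c \<in> ?X" "dI x c = \<rho>+1" for x c
      using cj_count[OF that, of] unfolding q_def by simp
    show "real (card {y\<in>?X. dI x y = 1 \<and> dI y c = \<rho> - 1}) = cC q \<rho>"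
      if "x \<in> ?X" "c \<in> ?X" "dI x c = \<rho>" for x c
      using cj_count[OF that rho1] unfolding q_def by simp
    show "cC q (\<rho>+1) > 0" by fact
    show "cC q \<rho> \<le> NC q n r 1" using crlt by simp
  qed
  have epsq: "cs.eps = \<epsilon>" unfolding cs.eps_def \<epsilon>_def ..
  have V: "real (card {y\<in>?X. dI y c \<le> \<rho>}) = VC q n r \<rho>" if c: "c \<in> C" for c
  proof -
    have cX: "c \<in> ?X" using c C(1) by blast
    have e: "{y\<in>?X. dI y c \<le> \<rho>} = (\<Union>d\<in>{..\<rho>}. {y\<in>?X. dI y c = d})" by auto
    have "card {y\<in>?X. dI y c \<le> \<rho>} = (\<Sum>d\<le>\<rho>. card {y\<in>?X. dI y c = d})"
      unfolding e by (rule card_UN_disjoint) (auto intro: finite_subset[OF _ finite_Esub])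
    then have "real (card {y\<in>?X. dI y c \<le> \<rho>}) = (\<Sum>d\<le>\<rho>. real (card {y\<in>?X. dI y c = d}))" by simp
    also have "\<dots> = (\<Sum>d\<le>\<rho>. NC q n r d)"
      by (rule sum.cong[OF refl]) (use sphere_count[OF cX] assms(7) rn in \<open>auto simp: q_def n_def\<close>)
    finally show ?thesis unfolding VC_def .
  qed
  have Nr: "real (card {y\<in>?X. dI y c = \<rho>}) = NC q n r \<rho>" if c: "c \<in> C" for c
    using sphere_count[of c r \<rho>] c C(1) assms(7) rn unfolding q_def n_def by auto
  have dpos: "NC q n r 1 - cC q \<rho> + 2 * cs.eps > 0" using crlt cs.eps_nonneg by simp
  have main: "real (card ?X) \<le> real (card C) * (VC q n r \<rho> - \<epsilon> / \<delta> * NC q n r \<rho>)"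
    using cs.main_bound[OF V Nr dpos] epsq unfolding \<delta>_def by simp
  define D where "D = VC q n r \<rho> - \<epsilon> / \<delta> * NC q n r \<rho>"
  have Dpos: "D > 0"
  proof (rule ccontr)
    assume "\<not> D > 0"
    then have "real (card C) * D \<le> 0" by (simp add: mult_nonneg_nonpos)
    then show False using main Xpos unfolding D_def by linarith
  qed
  have "gauss_binom q n r / D \<le> real (card C)"
    using main cardX Dpos unfolding D_def[symmetric] by (simp add: divide_le_eq)
  then show ?thesis using C(3) unfolding D_def by simp
qed


end
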